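(* For all $n\ge1$: (1) $R_n(1/2/3)=\{\sigma\in\Pi_n:\sigma\text{ has at most 2 blocks}\}$ and $\#R_n(1/2/3)=2^{n-1}$; (2) $R_n(123)=\{\sigma\in\Pi_n:\sigma\text{ is a matching}\}$ and $\#R_n(123)=\sum_{i\ge0}\binom n{2i}(2i)!!$; (3) $R_n(12/3)$ is the set of $\sigma\in\Pi_n$ for which there exists $k\in[0,n]$ such that $\sigma_{\le k}=1/2/\ldots/k$ and $\sigma_{>k}$ is layered with blocks $D_1,\ldots,D_t$ listed left to right satisfying $B(D_1)>B(D_2)>\cdots>B(D_t)$; and $\#R_n(12/3)=2^{n-1}$; (4) $R_n(1/23)=\{\sigma=C_1/\ldots/C_l\in\Pi_n\text{ (canonical order)}:\#C_i=1\text{ for all }i\ge2\}$ and $\#R_n(1/23)=2^{n-1}$; (5) $R_n(13/2)=\{\sigma\in\Pi_n:\sigma\text{ is layered}\}$ and $\#R_n(13/2)=2^{n-1}$.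
   Context: $[n]=\{1,\ldots,n\}$, $[a,b]=\{a,\ldots,b\}$; $\Pi_n$ is the set of partitions of $[n]$, written with slashes between blocks. A partition $\pi=B_1/\ldots/B_k$ is in canonical order if $\min B_1<\cdots<\min B_k$; for $S$ contained in a block of $\sigma$, $B(S)$ is the index of the block of $\sigma$ containing $S$ in canonical order. The restricted growth function of $\pi\in\Pi_n$ is $\rho(\pi)=a_1\ldots a_n$ with $a_i=B(\{i\})$. A sequence contains $r$ if some subsequence standardizes (order-preserving relabeling of values onto $1,2,\ldots$) to $r$. $\sigma$ R-contains $\pi$ if $\rho(\sigma)$ contains $\rho(\pi)$, otherwise R-avoids $\pi$; $R_n(\pi)$ is the set of $\sigma\in\Pi_n$ R-avoiding $\pi$. For $T\subseteq[n]$, $\sigma_T$ is the partition of $T$ with blocks the nonempty $C\cap T$, $C\in\sigma$; $\sigma_{\le k}=\sigma_{[k]}$, $\sigma_{>k}=\sigma_{[k+1,n]}$. A matching is a partition with all blocks of size at most 2; $(2i)!!=1\cdot3\cdots(2i-1)$, $(0)!!=1$. A partition (of a set of consecutive integers) is layered if all its blocks are intervals of consecutive integers. *)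

theory Defs
  imports Main "HOL-Library.Disjoint_Sets" "HOL-Library.Sublist"
begin

definition Pi_n :: "nat \<Rightarrow> nat set set set" where
  "Pi_n n = {P. partition_on {1..n} P}"

definition block_of :: "nat set set \<Rightarrow> nat set \<Rightarrow> nat set" where
  "block_of \<sigma> S = (THE C. C \<in> \<sigma> \<and> S \<subseteq> C)"

text \<open>Index (1-based) of a block C of sigma in canonical order (ordered by minima).\<close>
definition blockidx :: "nat set set \<Rightarrow> nat set \<Rightarrow> nat" where
  "blockidx \<sigma> C = card {D \<in> \<sigma>. Min D \<le> Min C}"

definition Bidx :: "nat set set \<Rightarrow> nat set \<Rightarrow> nat" where
  "Bidx \<sigma> S = blockidx \<sigma> (block_of \<sigma> S)"

definition rgf :: "nat set set \<Rightarrow> nat \<Rightarrow> nat list" where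
  "rgf \<sigma> n = map (\<lambda>i. Bidx \<sigma> {i}) [1..<n+1]"

definition std :: "nat list \<Rightarrow> nat list" where
  "std s = map (\<lambda>x. card {y \<in> set s. y \<le> x}) s"

definition contains :: "nat list \<Rightarrow> nat list \<Rightarrow> bool" where
  "contains w r \<longleftrightarrow> (\<exists>s. subseq s w \<and> std s = r)"

definition R_avoid :: "nat \<Rightarrow> nat set set \<Rightarrow> nat set set set" where
  "R_avoid n \<pi> = {\<sigma> \<in> Pi_n n. \<not> contains (rgf \<sigma> n) (rgf \<pi> 3)}"

definition restr :: "nat set set \<Rightarrow> nat set \<Rightarrow> nat set set" where
  "restr \<sigma> T = {C \<inter> T | C. C \<in> \<sigma> \<and> C \<inter> T \<noteq> {}}"

definition layered :: "nat set set \<Rightarrow> bool" where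
  "layered P \<longleftrightarrow> (\<forall>C\<in>P. \<exists>a b. C = {a..b})"

definition is_matching :: "nat set set \<Rightarrow> bool" where
  "is_matching \<sigma> \<longleftrightarrow> (\<forall>C\<in>\<sigma>. card C \<le> 2)"

text \<open>(2i)!! = 1*3*...*(2i-1), (0)!! = 1\<close>
definition dfact :: "nat \<Rightarrow> nat" where
  "dfact i = (\<Prod>j<i. 2*j+1)"

end

theory Submission
  imports Defs
begin


lemma subseq_Cons_any: "subseq (x#s) (y#ys) \<longleftrightarrow> (x = y \<and> subseq s ys) \<or> subseq (x#s) ys"
  by (cases "x = y") (auto dest: subseq_Cons')

lemma subseq_range:
  "subseq (x#s) (map f [a..<b]) \<longleftrightarrow> (\<exists>p. a \<le> p \<and> p < b \<and> x = f p \<and> subseq s (map f [Suc p..<b]))"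
proof (induction "b - a" arbitrary: a)
  case 0
  then show ?case by auto
next
  case (Suc d)
  then have ab: "a < b" by auto
  have e: "[a..<b] = a # [Suc a..<b]" using ab upt_rec by auto
  have IH: "subseq (x#s) (map f [Suc a..<b]) \<longleftrightarrow> (\<exists>p. Suc a \<le> p \<and> p < b \<and> x = f p \<and> subseq s (map f [Suc p..<b]))"
    using Suc by auto
  have "(\<exists>p. a \<le> p \<and> p < b \<and> x = f p \<and> subseq s (map f [Suc p..<b])) \<longleftrightarrow>
     (x = f a \<and> subseq s (map f [Suc a..<b])) \<or> (\<exists>p. Suc a \<le> p \<and> p < b \<and> x = f p \<and> subseq s (map f [Suc p..<b]))"
  proof
    assume "\<exists>p. a \<le> p \<and> p < b \<and> x = f p \<and> subseq s (map f [Suc p..<b])"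
    then obtain p where p: "a \<le> p" "p < b" "x = f p" "subseq s (map f [Suc p..<b])" by blast
    show "(x = f a \<and> subseq s (map f [Suc a..<b])) \<or> (\<exists>p. Suc a \<le> p \<and> p < b \<and> x = f p \<and> subseq s (map f [Suc p..<b]))"
    proof (cases "p = a")
      case True then show ?thesis using p by simp
    next
      case False then have "Suc a \<le> p" using p by simp
      then show ?thesis using p by blast
    qed
  next
    assume "(x = f a \<and> subseq s (map f [Suc a..<b])) \<or> (\<exists>p. Suc a \<le> p \<and> p < b \<and> x = f p \<and> subseq s (map f [Suc p..<b]))"
    then show "\<exists>p. a \<le> p \<and> p < b \<and> x = f p \<and> subseq s (map f [Suc p..<b])"
    proof
      assume "x = f a \<and> subseq s (map f [Suc a..<b])"
      then show ?thesis using ab by blast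
    next
      assume "\<exists>p. Suc a \<le> p \<and> p < b \<and> x = f p \<and> subseq s (map f [Suc p..<b])"
      then show ?thesis using Suc_leD by blast
    qed
  qed
  then show ?case
    unfolding e list.map subseq_Cons_any IH by simp
qed

lemma contains3:
  "contains (map f [a..<b]) [u,v,w] \<longleftrightarrow>
    (\<exists>i j k. a \<le> i \<and> i < j \<and> j < k \<and> k < b \<and> std [f i, f j, f k] = [u,v,w])"
proof -
  have "contains (map f [a..<b]) [u,v,w] \<longleftrightarrow> (\<exists>s. subseq s (map f [a..<b]) \<and> std s = [u,v,w])"
    by (simp add: contains_def)
  also have "\<dots> \<longleftrightarrow> (\<exists>x y z. subseq [x,y,z] (map f [a..<b]) \<and> std [x,y,z] = [u,v,w])"
  proof
    assume "\<exists>s. subseq s (map f [a..<b]) \<and> std s = [u,v,w]"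
    then obtain s where s: "subseq s (map f [a..<b])" "std s = [u,v,w]" by blast
    have "length (std s) = length s" by (simp add: std_def)
    then have "length s = 3" using s(2) by simp
    then obtain x y z where "s = [x,y,z]"
      by (cases s; cases "tl s"; cases "tl (tl s)") (auto simp: numeral_3_eq_3)
    then show "\<exists>x y z. subseq [x,y,z] (map f [a..<b]) \<and> std [x,y,z] = [u,v,w]" using s by blast
  qed blast
  also have "\<dots> \<longleftrightarrow> (\<exists>i j k. a \<le> i \<and> i < j \<and> j < k \<and> k < b \<and> std [f i, f j, f k] = [u,v,w])"
    unfolding subseq_range
  proof safe
    fix i j k assume "a \<le> i" "i < j" "j < k" "k < b" "std [f i, f j, f k] = [u, v, w]"
    then show "\<exists>x y z. (\<exists>p\<ge>a. p < b \<and> x = f p \<and> (\<exists>pa\<ge>Suc p. pa < b \<and> y = f pa \<and> (\<exists>p\<ge>Suc pa. p < b \<and> z = f p \<and> subseq [] (map f [Suc p..<b])))) \<and>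
                std [x, y, z] = [u, v, w]" by (intro exI conjI) (auto simp: Suc_le_eq)
  qed (auto simp: Suc_le_eq)
  finally show ?thesis .
qed


lemma Collect_insert_filter: "{u \<in> insert a A. P u} = (if P a then insert a {u\<in>A. P u} else {u\<in>A. P u})"
  by auto

lemma std3_eq: "std [x,y,z] = [card {u\<in>{x,y,z}. u \<le> x}, card {u\<in>{x,y,z}. u \<le> y}, card {u\<in>{x,y,z}. u \<le> z}]"
  by (simp add: std_def)

lemma std_123: "std [x,y,z::nat] = [1,2,3] \<longleftrightarrow> x < y \<and> y < z"
  unfolding std3_eq Collect_insert_filter
  by (cases x y rule: linorder_cases; cases y z rule: linorder_cases; cases x z rule: linorder_cases)
     (simp_all add: card_insert_if)

lemma std_111: "std [x,y,z::nat] = [1,1,1] \<longleftrightarrow> x = y \<and> y = z"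
  unfolding std3_eq Collect_insert_filter
  by (cases x y rule: linorder_cases; cases y z rule: linorder_cases; cases x z rule: linorder_cases)
     (simp_all add: card_insert_if)

lemma std_112: "std [x,y,z::nat] = [1,1,2] \<longleftrightarrow> x = y \<and> y < z"
  unfolding std3_eq Collect_insert_filter
  by (cases x y rule: linorder_cases; cases y z rule: linorder_cases; cases x z rule: linorder_cases)
     (simp_all add: card_insert_if)

lemma std_122: "std [x,y,z::nat] = [1,2,2] \<longleftrightarrow> x < y \<and> y = z"
  unfolding std3_eq Collect_insert_filter
  by (cases x y rule: linorder_cases; cases y z rule: linorder_cases; cases x z rule: linorder_cases)
     (simp_all add: card_insert_if)

lemma std_121: "std [x,y,z::nat] = [1,2,1] \<longleftrightarrow> x = z \<and> x < y"
  unfolding std3_eq Collect_insert_filter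
  by (cases x y rule: linorder_cases; cases y z rule: linorder_cases; cases x z rule: linorder_cases)
     (simp_all add: card_insert_if)

lemma bo: "block_of P {i} = C" if "C \<in> P" "i \<in> C" "\<And>D. D \<in> P \<Longrightarrow> i \<in> D \<Longrightarrow> D = C"
  unfolding block_of_def proof (rule the_equality) show "C \<in> P \<and> {i} \<subseteq> C" using that(1,2) by simp next fix D assume "D \<in> P \<and> {i} \<subseteq> D" then show "D = C" using that(3) by blast qed

lemma u3: "[1..<3+1] = [1::nat,2,3]" by (simp add: numeral_3_eq_3 upt_rec)

lemma rgf_123: "rgf {{1},{2},{3}} 3 = [1,2,3]"
proof -
  have b1: "block_of {{1},{2},{3::nat}} {1} = {1}" by (rule bo) auto
  have b2: "block_of {{1},{2},{3::nat}} {2} = {2}" by (rule bo) auto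
  have b3: "block_of {{1},{2},{3::nat}} {3} = {3}" by (rule bo) auto
  show ?thesis unfolding rgf_def u3 list.map Bidx_def b1 b2 b3 blockidx_def Collect_insert_filter by (simp add: card_insert_if)
qed

lemma rgf_111: "rgf {{1,2,3}} 3 = [1,1,1]"
proof -
  have b1: "block_of {{1,2,3::nat}} {1} = {1,2,3}" by (rule bo) auto
  have b2: "block_of {{1,2,3::nat}} {2} = {1,2,3}" by (rule bo) auto
  have b3: "block_of {{1,2,3::nat}} {3} = {1,2,3}" by (rule bo) auto
  show ?thesis unfolding rgf_def u3 list.map Bidx_def b1 b2 b3 blockidx_def Collect_insert_filter by (simp add: card_insert_if)
qed

lemma rgf_112: "rgf {{1,2},{3}} 3 = [1,1,2]"
proof -
  have b1: "block_of {{1,2},{3::nat}} {1} = {1,2}" by (rule bo) auto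
  have b2: "block_of {{1,2},{3::nat}} {2} = {1,2}" by (rule bo) auto
  have b3: "block_of {{1,2},{3::nat}} {3} = {3}" by (rule bo) auto
  show ?thesis unfolding rgf_def u3 list.map Bidx_def b1 b2 b3 blockidx_def Collect_insert_filter by (simp add: card_insert_if)
qed

lemma rgf_122: "rgf {{1},{2,3}} 3 = [1,2,2]"
proof -
  have b1: "block_of {{1},{2,3::nat}} {1} = {1}" by (rule bo) auto
  have b2: "block_of {{1},{2,3::nat}} {2} = {2,3}" by (rule bo) auto
  have b3: "block_of {{1},{2,3::nat}} {3} = {2,3}" by (rule bo) auto
  show ?thesis unfolding rgf_def u3 list.map Bidx_def b1 b2 b3 blockidx_def Collect_insert_filter by (simp add: card_insert_if)
qed

lemma rgf_121: "rgf {{1,3},{2}} 3 = [1,2,1]"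
proof -
  have b1: "block_of {{1,3},{2::nat}} {1} = {1,3}" by (rule bo) auto
  have b2: "block_of {{1,3},{2::nat}} {2} = {2}" by (rule bo) auto
  have b3: "block_of {{1,3},{2::nat}} {3} = {1,3}" by (rule bo) auto
  show ?thesis unfolding rgf_def u3 list.map Bidx_def b1 b2 b3 blockidx_def Collect_insert_filter by (simp add: card_insert_if)
qed


definition blk :: "nat set set \<Rightarrow> nat \<Rightarrow> nat set" where
  "blk \<sigma> i = (THE C. C \<in> \<sigma> \<and> i \<in> C)"

definition mb :: "nat set set \<Rightarrow> nat \<Rightarrow> nat" where
  "mb \<sigma> i = Min (blk \<sigma> i)"

lemma part_unique: "partition_on A P \<Longrightarrow> C \<in> P \<Longrightarrow> D \<in> P \<Longrightarrow> x \<in> C \<Longrightarrow> x \<in> D \<Longrightarrow> C = D"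
  unfolding partition_on_def disjoint_def by blast

lemma part_ex: "partition_on A P \<Longrightarrow> x \<in> A \<Longrightarrow> \<exists>C\<in>P. x \<in> C"
  unfolding partition_on_def by blast

lemma part_sub: "partition_on A P \<Longrightarrow> C \<in> P \<Longrightarrow> C \<subseteq> A"
  unfolding partition_on_def by blast

lemma part_ne: "partition_on A P \<Longrightarrow> C \<in> P \<Longrightarrow> C \<noteq> {}"
  unfolding partition_on_def by blast

lemma blk_eq: assumes "partition_on A P" "C \<in> P" "x \<in> C" shows "blk P x = C"
  unfolding blk_def
proof (rule the_equality)
  show "C \<in> P \<and> x \<in> C" using assms by simp
next
  fix D assume "D \<in> P \<and> x \<in> D" then show "D = C" using part_unique[OF assms(1)] assms(2,3) by blast
qed

lemma blk_mem: assumes "partition_on A P" "x \<in> A" shows "blk P x \<in> P" "x \<in> blk P x"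
proof -
  obtain C where "C \<in> P" "x \<in> C" using part_ex[OF assms] by blast
  then show "blk P x \<in> P" "x \<in> blk P x" using blk_eq[OF assms(1)] by auto
qed

lemma block_of_single: assumes "partition_on A P" "x \<in> A" shows "block_of P {x} = blk P x"
  using bo[of "blk P x" P x] blk_mem[OF assms] blk_eq[OF assms(1)] by blast

lemma block_of_sub: assumes "partition_on A P" "C \<in> P" "S \<subseteq> C" "S \<noteq> {}" shows "block_of P S = C"
  unfolding block_of_def
proof (rule the_equality)
  show "C \<in> P \<and> S \<subseteq> C" using assms by simp
next
  fix D assume "D \<in> P \<and> S \<subseteq> D" then show "D = C" using part_unique[OF assms(1)] assms by blast
qed

context
  fixes A :: "nat set" and P :: "nat set set"
  assumes P: "partition_on A P" and fin: "finite A"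
begin

lemma blk_fin: "C \<in> P \<Longrightarrow> finite C"
  using part_sub[OF P] fin finite_subset by blast

lemma mb_in: "x \<in> A \<Longrightarrow> mb P x \<in> blk P x"
  unfolding mb_def using blk_mem[OF P] blk_fin Min_in by blast

lemma mb_le: "x \<in> A \<Longrightarrow> mb P x \<le> x"
  unfolding mb_def using blk_mem[OF P] blk_fin Min_le by blast

lemma mb_A: "x \<in> A \<Longrightarrow> mb P x \<in> A"
  using mb_in blk_mem[OF P] part_sub[OF P] by blast

lemma blk_mb: "x \<in> A \<Longrightarrow> blk P (mb P x) = blk P x"
  using mb_in blk_mem[OF P] blk_eq[OF P] by blast

lemma mb_mb: "x \<in> A \<Longrightarrow> mb P (mb P x) = mb P x"
  using blk_mb unfolding mb_def by simp

lemma mb_eq_iff: "x \<in> A \<Longrightarrow> y \<in> A \<Longrightarrow> mb P x = mb P y \<longleftrightarrow> blk P x = blk P y"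
  by (metis blk_mb mb_def)

lemma mb_eq_blk: "x \<in> A \<Longrightarrow> C \<in> P \<Longrightarrow> x \<in> C \<Longrightarrow> mb P x = Min C"
  unfolding mb_def using blk_eq[OF P] by simp

lemma finP: "finite P"
  using finite_elements[OF fin P] .

lemma blockidx_less_aux: assumes "C \<in> P" "D \<in> P" "Min C < Min D" shows "blockidx P C < blockidx P D"
proof -
  have a: "{E \<in> P. Min E \<le> Min C} \<subseteq> {E \<in> P. Min E \<le> Min D}" using assms by auto
  have b: "D \<in> {E \<in> P. Min E \<le> Min D}" "D \<notin> {E \<in> P. Min E \<le> Min C}" using assms by auto
  have "{E \<in> P. Min E \<le> Min C} \<subset> {E \<in> P. Min E \<le> Min D}" using a b by blast
  then show ?thesis unfolding blockidx_def using finP by (intro psubset_card_mono) auto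
qed

lemma Min_inj: assumes "C \<in> P" "D \<in> P" "Min C = Min D" shows "C = D"
proof -
  have "Min C \<in> C" "Min D \<in> D" using assms blk_fin part_ne[OF P] Min_in by blast+
  then show ?thesis using part_unique[OF P assms(1,2)] assms(3) by simp
qed

lemma blockidx_less: assumes "C \<in> P" "D \<in> P" shows "blockidx P C < blockidx P D \<longleftrightarrow> Min C < Min D"
  using blockidx_less_aux[OF assms] blockidx_less_aux[OF assms(2,1)] Min_inj[OF assms]
  by (metis less_not_sym linorder_neqE_nat)

lemma Bidx_single: "x \<in> A \<Longrightarrow> Bidx P {x} = blockidx P (blk P x)"
  unfolding Bidx_def using block_of_single[OF P] by simp

lemma Bidx_less: "x \<in> A \<Longrightarrow> y \<in> A \<Longrightarrow> Bidx P {x} < Bidx P {y} \<longleftrightarrow> mb P x < mb P y"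
  using Bidx_single blockidx_less blk_mem[OF P] unfolding mb_def by simp

lemma Bidx_eq: assumes "x \<in> A" "y \<in> A" shows "Bidx P {x} = Bidx P {y} \<longleftrightarrow> mb P x = mb P y"
  using Bidx_less[OF assms] Bidx_less[OF assms(2,1)] by (metis linorder_neqE_nat less_irrefl)

end

lemma Pi_n_iff: "\<sigma> \<in> Pi_n n \<longleftrightarrow> partition_on {1..n} \<sigma>"
  by (simp add: Pi_n_def)

lemma rgf_map: "rgf \<sigma> n = map (\<lambda>i. Bidx \<sigma> {i}) [1..<Suc n]"
  by (simp add: rgf_def)

lemma ex3_cong: "(\<And>i j k. 1 \<le> i \<Longrightarrow> i < j \<Longrightarrow> j < k \<Longrightarrow> k \<le> n \<Longrightarrow> (X i j k \<longleftrightarrow> Y i j k)) \<Longrightarrow>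
  (\<exists>i j k. 1 \<le> i \<and> i < j \<and> j < (k::nat) \<and> k \<le> n \<and> X i j k) \<longleftrightarrow> (\<exists>i j k. 1 \<le> i \<and> i < j \<and> j < k \<and> k \<le> n \<and> Y i j k)"
  by blast

context
  fixes n :: nat and \<sigma> :: "nat set set"
  assumes P: "partition_on {1..n} \<sigma>"
begin

lemma cont_gen: "contains (rgf \<sigma> n) [u,v,w] \<longleftrightarrow>
    (\<exists>i j k. 1 \<le> i \<and> i < j \<and> j < k \<and> k \<le> n \<and> std [Bidx \<sigma> {i}, Bidx \<sigma> {j}, Bidx \<sigma> {k}] = [u,v,w])"
  unfolding rgf_map contains3 by (simp add: less_Suc_eq_le)

lemma rng: "1 \<le> i \<Longrightarrow> i < j \<Longrightarrow> j < k \<Longrightarrow> k \<le> n \<Longrightarrow> i \<in> {1..n} \<and> j \<in> {1..n} \<and> k \<in> {1..n}"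
  by auto

lemmas BL_s1 = Bidx_less[OF P finite_atLeastAtMost] Bidx_eq[OF P finite_atLeastAtMost]

lemma c123: "contains (rgf \<sigma> n) [1,2,3] \<longleftrightarrow>
    (\<exists>i j k. 1 \<le> i \<and> i < j \<and> j < k \<and> k \<le> n \<and> mb \<sigma> i < mb \<sigma> j \<and> mb \<sigma> j < mb \<sigma> k)"
  unfolding cont_gen
  by (intro ex3_cong, subst std_123) (simp add: BL_s1 rng)

lemma c111: "contains (rgf \<sigma> n) [1,1,1] \<longleftrightarrow>
    (\<exists>i j k. 1 \<le> i \<and> i < j \<and> j < k \<and> k \<le> n \<and> mb \<sigma> i = mb \<sigma> j \<and> mb \<sigma> j = mb \<sigma> k)"
  unfolding cont_gen
  by (intro ex3_cong, subst std_111) (simp add: BL_s1 rng)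

lemma c112: "contains (rgf \<sigma> n) [1,1,2] \<longleftrightarrow>
    (\<exists>i j k. 1 \<le> i \<and> i < j \<and> j < k \<and> k \<le> n \<and> mb \<sigma> i = mb \<sigma> j \<and> mb \<sigma> j < mb \<sigma> k)"
  unfolding cont_gen
  by (intro ex3_cong, subst std_112) (simp add: BL_s1 rng)

lemma c122: "contains (rgf \<sigma> n) [1,2,2] \<longleftrightarrow>
    (\<exists>i j k. 1 \<le> i \<and> i < j \<and> j < k \<and> k \<le> n \<and> mb \<sigma> i < mb \<sigma> j \<and> mb \<sigma> j = mb \<sigma> k)"
  unfolding cont_gen
  by (intro ex3_cong, subst std_122) (simp add: BL_s1 rng)

lemma c121: "contains (rgf \<sigma> n) [1,2,1] \<longleftrightarrow>
    (\<exists>i j k. 1 \<le> i \<and> i < j \<and> j < k \<and> k \<le> n \<and> mb \<sigma> i = mb \<sigma> k \<and> mb \<sigma> i < mb \<sigma> j)"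
  unfolding cont_gen
  by (intro ex3_cong, subst std_121) (simp add: BL_s1 rng)

end


lemma three_sorted: assumes "finite (S::nat set)" "3 \<le> card S"
  shows "\<exists>a b c. a \<in> S \<and> b \<in> S \<and> c \<in> S \<and> a < b \<and> b < c"
proof -
  obtain T where T: "T \<subseteq> S" "card T = 3" using obtain_subset_with_card_n[OF assms(2)] by blast
  then obtain x y z where xyz: "T = {x,y,z}" "x \<noteq> y" "y \<noteq> z" "x \<noteq> z" using card_3_iff by metis
  have "\<exists>a b c. a \<in> {x,y,z} \<and> b \<in> {x,y,z} \<and> c \<in> {x,y,z} \<and> a < b \<and> b < c"
    using xyz(2-4)
    by (cases x y rule: linorder_cases; cases y z rule: linorder_cases; cases x z rule: linorder_cases) blast+
  then show ?thesis using T xyz by blast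
qed

lemma card3_sub: "a \<in> S \<Longrightarrow> b \<in> S \<Longrightarrow> c \<in> S \<Longrightarrow> a < b \<Longrightarrow> b < c \<Longrightarrow> finite S \<Longrightarrow> 3 \<le> card (S::nat set)"
proof -
  assume h: "a \<in> S" "b \<in> S" "c \<in> S" "a < b" "b < c" "finite S"
  have "card {a,b,c} = 3" using h by simp
  moreover have "card {a,b,c} \<le> card S" using h by (intro card_mono) auto
  ultimately show ?thesis by simp
qed

context
  fixes n :: nat and \<sigma> :: "nat set set"
  assumes P: "partition_on {1..n} \<sigma>"
begin

lemma fA: "finite {1..n}" by simp

lemmas Mb_in_s2 = mb_in[OF P fA]
lemmas Mb_le_s2 = mb_le[OF P fA]
lemmas Mb_A_s2 = mb_A[OF P fA]
lemmas Blk_mb_s2 = blk_mb[OF P fA]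
lemmas Mb_mb_s2 = mb_mb[OF P fA]
lemmas Mb_eq_iff_s2 = mb_eq_iff[OF P fA]
lemmas Mb_eq_blk_s2 = mb_eq_blk[OF P fA]
lemmas Blk_mem_s2 = blk_mem[OF P]
lemmas Blk_eq_s2 = blk_eq[OF P]
lemmas Psub_s2 = part_sub[OF P]
lemmas Pne_s2 = part_ne[OF P]
lemmas Pfin_s2 = blk_fin[OF P fA]
lemmas finS_s2 = finP[OF P fA]

lemma Min_self: "C \<in> \<sigma> \<Longrightarrow> mb \<sigma> (Min C) = Min C"
proof -
  assume C: "C \<in> \<sigma>"
  have "Min C \<in> C" using Min_in[OF Pfin_s2[OF C] Pne_s2[OF C]] .
  then show ?thesis using Mb_eq_blk_s2[of "Min C" C] C Psub_s2 by blast
qed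

lemma char1: "\<not> contains (rgf \<sigma> n) [1,2,3] \<longleftrightarrow> card \<sigma> \<le> 2"
proof
  assume "\<not> contains (rgf \<sigma> n) [1,2,3]"
  then have np: "\<not> (\<exists>i j k. 1 \<le> i \<and> i < j \<and> j < k \<and> k \<le> n \<and> mb \<sigma> i < mb \<sigma> j \<and> mb \<sigma> j < mb \<sigma> k)"
    using c123[OF P] by simp
  show "card \<sigma> \<le> 2"
  proof (rule ccontr)
    assume "\<not> card \<sigma> \<le> 2"
    moreover have "inj_on Min \<sigma>" unfolding inj_on_def using Min_inj[OF P fA] by blast
    ultimately have "3 \<le> card (Min ` \<sigma>)" using card_image[of Min \<sigma>] by simp
    then obtain a b c where abc: "a \<in> Min ` \<sigma>" "b \<in> Min ` \<sigma>" "c \<in> Min ` \<sigma>" "a < b" "b < c"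
      using three_sorted[of "Min ` \<sigma>"] finP[OF P fA] by blast
    have h: "mb \<sigma> x = x \<and> 1 \<le> x \<and> x \<le> n" if xin: "x \<in> Min ` \<sigma>" for x
    proof -
      obtain C where C: "C \<in> \<sigma>" "x = Min C" using xin by (rule imageE)
      have "x \<in> C" using C Min_in Pfin_s2 Pne_s2 by blast
      then show ?thesis using Min_self C Psub_s2[OF C(1)] by auto
    qed
    have "1 \<le> a \<and> a < b \<and> b < c \<and> c \<le> n \<and> mb \<sigma> a < mb \<sigma> b \<and> mb \<sigma> b < mb \<sigma> c"
      using h[OF abc(1)] h[OF abc(2)] h[OF abc(3)] abc(4,5) by auto
    then show False using np by blast
  qed
next
  assume c: "card \<sigma> \<le> 2"
  show "\<not> contains (rgf \<sigma> n) [1,2,3]"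
  proof
    assume "contains (rgf \<sigma> n) [1,2,3]"
    then obtain i j k where ijk: "1 \<le> i" "i < j" "j < k" "k \<le> n" "mb \<sigma> i < mb \<sigma> j" "mb \<sigma> j < mb \<sigma> k"
      using c123[OF P] by blast
    have "3 \<le> card (mb \<sigma> ` {1..n})"
      using ijk by (intro card3_sub[of "mb \<sigma> i" _ "mb \<sigma> j" "mb \<sigma> k"]) auto
    moreover have "mb \<sigma> ` {1..n} \<subseteq> Min ` \<sigma>" unfolding mb_def using Blk_mem_s2 by blast
    then have "card (mb \<sigma> ` {1..n}) \<le> card \<sigma>" 
      by (meson card_image_le card_mono finS_s2 finite_imageI order_trans)
    ultimately show False using c by simp
  qed
qed

lemma char2: "\<not> contains (rgf \<sigma> n) [1,1,1] \<longleftrightarrow> is_matching \<sigma>"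
proof
  assume "\<not> contains (rgf \<sigma> n) [1,1,1]"
  then have np: "\<not> (\<exists>i j k. 1 \<le> i \<and> i < j \<and> j < k \<and> k \<le> n \<and> mb \<sigma> i = mb \<sigma> j \<and> mb \<sigma> j = mb \<sigma> k)"
    using c111[OF P] by simp
  show "is_matching \<sigma>" unfolding is_matching_def
  proof (rule ccontr)
    assume "\<not> (\<forall>C\<in>\<sigma>. card C \<le> 2)"
    then obtain C where C: "C \<in> \<sigma>" "3 \<le> card C" by force
    then obtain a b c where abc: "a \<in> C" "b \<in> C" "c \<in> C" "a < b" "b < c"
      using three_sorted[of C] Pfin_s2[OF C(1)] C(2) by blast
    have h: "mb \<sigma> x = Min C \<and> 1 \<le> x \<and> x \<le> n" if "x \<in> C" for x
      using Mb_eq_blk_s2[OF _ C(1) that] Psub_s2[OF C(1)] that by auto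
    have "1 \<le> a \<and> a < b \<and> b < c \<and> c \<le> n \<and> mb \<sigma> a = mb \<sigma> b \<and> mb \<sigma> b = mb \<sigma> c"
      using h[OF abc(1)] h[OF abc(2)] h[OF abc(3)] abc(4,5) by auto
    then show False using np by blast
  qed
next
  assume c: "is_matching \<sigma>"
  show "\<not> contains (rgf \<sigma> n) [1,1,1]"
  proof
    assume "contains (rgf \<sigma> n) [1,1,1]"
    then obtain i j k where ijk: "1 \<le> i" "i < j" "j < k" "k \<le> n" "mb \<sigma> i = mb \<sigma> j" "mb \<sigma> j = mb \<sigma> k"
      using c111[OF P] by blast
    have ins: "i \<in> {1..n}" "j \<in> {1..n}" "k \<in> {1..n}" using ijk by auto
    have "blk \<sigma> i = blk \<sigma> j" "blk \<sigma> j = blk \<sigma> k" using ijk Mb_eq_iff_s2 ins by auto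
    then have "i \<in> blk \<sigma> k" "j \<in> blk \<sigma> k" "k \<in> blk \<sigma> k" using Blk_mem_s2 ins by metis+
    moreover have "blk \<sigma> k \<in> \<sigma>" using Blk_mem_s2 ins by blast
    ultimately have "3 \<le> card (blk \<sigma> k)" using ijk card3_sub Pfin_s2 by blast
    then show False using c \<open>blk \<sigma> k \<in> \<sigma>\<close> unfolding is_matching_def by fastforce
  qed
qed

end


context
  fixes n :: nat and \<sigma> :: "nat set set"
  assumes P: "partition_on {1..n} \<sigma>"
begin

lemmas Mb_in_s3 = mb_in[OF P finite_atLeastAtMost]
lemmas Mb_le_s3 = mb_le[OF P finite_atLeastAtMost]
lemmas Mb_A_s3 = mb_A[OF P finite_atLeastAtMost]
lemmas Blk_mb_s3 = blk_mb[OF P finite_atLeastAtMost]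
lemmas Mb_mb_s3 = mb_mb[OF P finite_atLeastAtMost]
lemmas Mb_eq_iff_s3 = mb_eq_iff[OF P finite_atLeastAtMost]
lemmas Mb_eq_blk_s3 = mb_eq_blk[OF P finite_atLeastAtMost]
lemmas Blk_mem_s3 = blk_mem[OF P]
lemmas Blk_eq_s3 = blk_eq[OF P]
lemmas Psub_s3 = part_sub[OF P]
lemmas Pne_s3 = part_ne[OF P]
lemmas Pfin_s3 = blk_fin[OF P finite_atLeastAtMost]
lemmas finS_s3 = finP[OF P finite_atLeastAtMost]
lemmas MinS_s3 = Min_self[OF P]

lemma MinC_in: assumes "C \<in> \<sigma>" shows "Min C \<in> C"
  using Min_in[OF Pfin_s3[OF assms] Pne_s3[OF assms]] .

lemma blockidx_ge2: assumes "C \<in> \<sigma>" shows "2 \<le> blockidx \<sigma> C \<longleftrightarrow> Min C \<noteq> 1"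
proof -
  have fin: "finite {D \<in> \<sigma>. Min D \<le> Min C}" using finS_s3 by simp
  have Cin: "C \<in> {D \<in> \<sigma>. Min D \<le> Min C}" using assms by simp
  show ?thesis
  proof
    assume "2 \<le> blockidx \<sigma> C"
    then have "card {D \<in> \<sigma>. Min D \<le> Min C} \<ge> 2" unfolding blockidx_def .
    then obtain D where D: "D \<in> \<sigma>" "Min D \<le> Min C" "D \<noteq> C"
      using Cin fin by (metis (no_types, lifting) card_le_Suc0_iff_eq mem_Collect_eq not_less_eq_eq numeral_2_eq_2)
    have "Min D \<noteq> Min C" using Min_inj[OF P finite_atLeastAtMost D(1) assms] D(3) by blast
    moreover have "Min D \<ge> 1" using MinC_in[OF D(1)] Psub_s3[OF D(1)] by auto
    ultimately show "Min C \<noteq> 1" using D(2) by simp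
  next
    assume h: "Min C \<noteq> 1"
    then have n1: "1 \<in> {1..n}" using MinC_in[OF assms] Psub_s3[OF assms] by auto
    let ?D = "blk \<sigma> 1"
    have D: "?D \<in> \<sigma>" "1 \<in> ?D" using Blk_mem_s3[OF n1] by auto
    have "Min ?D = 1" using Min_le[OF Pfin_s3[OF D(1)] D(2)] MinC_in[OF D(1)] Psub_s3[OF D(1)] by force
    then have "?D \<noteq> C" using h by auto
    moreover have "?D \<in> {D \<in> \<sigma>. Min D \<le> Min C}" using D \<open>Min ?D = 1\<close> MinC_in[OF assms] Psub_s3[OF assms] by force
    ultimately have "{?D, C} \<subseteq> {D \<in> \<sigma>. Min D \<le> Min C}" using Cin by blast
    then have "card {?D, C} \<le> card {D \<in> \<sigma>. Min D \<le> Min C}" using fin card_mono by blast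
    then show "2 \<le> blockidx \<sigma> C" unfolding blockidx_def using \<open>?D \<noteq> C\<close> by simp
  qed
qed

lemma char4: "\<not> contains (rgf \<sigma> n) [1,2,2] \<longleftrightarrow> (\<forall>C\<in>\<sigma>. blockidx \<sigma> C \<ge> 2 \<longrightarrow> card C = 1)"
proof
  assume "\<not> contains (rgf \<sigma> n) [1,2,2]"
  then have np: "\<not> (\<exists>i j k. 1 \<le> i \<and> i < j \<and> j < k \<and> k \<le> n \<and> mb \<sigma> i < mb \<sigma> j \<and> mb \<sigma> j = mb \<sigma> k)"
    using c122[OF P] by simp
  show "\<forall>C\<in>\<sigma>. blockidx \<sigma> C \<ge> 2 \<longrightarrow> card C = 1"
  proof (intro ballI impI, rule ccontr)
    fix C assume C: "C \<in> \<sigma>" "2 \<le> blockidx \<sigma> C" "card C \<noteq> 1"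
    have m1: "Min C \<noteq> 1" using blockidx_ge2 C by blast
    have "card C \<ge> 2" using C(3) Pne_s3[OF C(1)] Pfin_s3[OF C(1)]
      by (metis One_nat_def card_0_eq less_2_cases not_less)
    then obtain k where k: "k \<in> C" "k \<noteq> Min C"
      by (metis MinC_in[OF C(1)] card_le_Suc0_iff_eq Pfin_s3[OF C(1)] not_less_eq_eq numeral_2_eq_2)
    have jk: "Min C < k" using k Min_le[OF Pfin_s3[OF C(1)] k(1)] by simp
    have j1: "1 < Min C" using m1 MinC_in[OF C(1)] Psub_s3[OF C(1)] by force
    have kn: "k \<le> n" using k Psub_s3[OF C(1)] by auto
    have n1: "1 \<in> {1..n}" using j1 jk kn by auto
    have "mb \<sigma> 1 = 1" using Mb_le_s3[OF n1] Mb_A_s3[OF n1] by auto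
    moreover have "mb \<sigma> (Min C) = Min C" using MinS_s3[OF C(1)] .
    moreover have "mb \<sigma> k = Min C" using Mb_eq_blk_s3[OF _ C(1) k(1)] k(1) Psub_s3[OF C(1)] by blast
    ultimately have "1 \<le> (1::nat) \<and> 1 < Min C \<and> Min C < k \<and> k \<le> n \<and> mb \<sigma> 1 < mb \<sigma> (Min C) \<and> mb \<sigma> (Min C) = mb \<sigma> k"
      using j1 jk kn by simp
    then show False using np by blast
  qed
next
  assume c: "\<forall>C\<in>\<sigma>. blockidx \<sigma> C \<ge> 2 \<longrightarrow> card C = 1"
  show "\<not> contains (rgf \<sigma> n) [1,2,2]"
  proof
    assume "contains (rgf \<sigma> n) [1,2,2]"
    then obtain i j k where ijk: "1 \<le> i" "i < j" "j < k" "k \<le> n" "mb \<sigma> i < mb \<sigma> j" "mb \<sigma> j = mb \<sigma> k"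
      using c122[OF P] by blast
    have ins: "i \<in> {1..n}" "j \<in> {1..n}" "k \<in> {1..n}" using ijk by auto
    let ?C = "blk \<sigma> j"
    have C: "?C \<in> \<sigma>" "j \<in> ?C" "k \<in> ?C" using Blk_mem_s3 ins Mb_eq_iff_s3 ijk(6) by metis+
    have "Min ?C = mb \<sigma> j" unfolding mb_def ..
    then have "Min ?C \<noteq> 1" using ijk(5) Mb_A_s3[OF ins(1)] by auto
    then have "2 \<le> blockidx \<sigma> ?C" using blockidx_ge2 C(1) by blast
    moreover have "card {j,k} \<le> card ?C" using C Pfin_s3[OF C(1)] by (intro card_mono) auto
    then have "card ?C \<ge> 2" using ijk(3) by simp
    ultimately show False using c C(1) by auto
  qed
qed

lemma char5: "\<not> contains (rgf \<sigma> n) [1,2,1] \<longleftrightarrow> layered \<sigma>"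
proof
  assume "\<not> contains (rgf \<sigma> n) [1,2,1]"
  then have np: "\<not> (\<exists>i j k. 1 \<le> i \<and> i < j \<and> j < k \<and> k \<le> n \<and> mb \<sigma> i = mb \<sigma> k \<and> mb \<sigma> i < mb \<sigma> j)"
    using c121[OF P] by simp
  show "layered \<sigma>" unfolding layered_def
  proof
    fix C assume C: "C \<in> \<sigma>"
    have "C = {Min C..Max C}"
    proof
      show "C \<subseteq> {Min C..Max C}" using Pfin_s3[OF C] by (simp add: subset_iff)
    next
      show "{Min C..Max C} \<subseteq> C"
      proof
        fix x assume x: "x \<in> {Min C..Max C}"
        show "x \<in> C"
        proof (rule ccontr)
          assume xC: "x \<notin> C"
          have a: "Min C \<in> C" "Max C \<in> C" using MinC_in[OF C] Max_in[OF Pfin_s3[OF C] Pne_s3[OF C]] by auto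
          have ax: "Min C < x" "x < Max C" using x xC a by (auto simp: le_less)
          have xn: "x \<in> {1..n}" using ax a Psub_s3[OF C] by auto
          have ma: "mb \<sigma> (Min C) = Min C" "mb \<sigma> (Max C) = Min C" 
            using MinS_s3[OF C] Mb_eq_blk_s3[OF _ C a(2)] a Psub_s3[OF C] by auto
          have "blk \<sigma> x \<noteq> C" using Blk_mem_s3[OF xn] xC by auto
          then have "mb \<sigma> x \<noteq> Min C" using Mb_eq_blk_s3[OF xn] Blk_mem_s3[OF xn] Min_inj[OF P finite_atLeastAtMost] C unfolding mb_def
            by metis
          then show False
          proof (cases "mb \<sigma> x > Min C")
            case True
            have "1 \<le> Min C \<and> Min C < x \<and> x < Max C \<and> Max C \<le> n \<and> mb \<sigma> (Min C) = mb \<sigma> (Max C) \<and> mb \<sigma> (Min C) < mb \<sigma> x"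
              using ma ax True a Psub_s3[OF C] by auto
            then show False using np by blast
          next
            case False
            then have lt: "mb \<sigma> x < Min C" using \<open>mb \<sigma> x \<noteq> Min C\<close> by simp
            have "mb \<sigma> x \<in> {1..n}" using Mb_A_s3[OF xn] .
            then have "1 \<le> mb \<sigma> x \<and> mb \<sigma> x < Min C \<and> Min C < x \<and> x \<le> n \<and> mb \<sigma> (mb \<sigma> x) = mb \<sigma> x \<and> mb \<sigma> (mb \<sigma> x) < mb \<sigma> (Min C)"
              using lt ax xn Mb_mb_s3[OF xn] ma by auto
            then show False using np by blast
          qed
        qed
      qed
    qed
    then show "\<exists>a b. C = {a..b}" by blast
  qed
next
  assume L: "layered \<sigma>"
  show "\<not> contains (rgf \<sigma> n) [1,2,1]"
  proof
    assume "contains (rgf \<sigma> n) [1,2,1]"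
    then obtain i j k where ijk: "1 \<le> i" "i < j" "j < k" "k \<le> n" "mb \<sigma> i = mb \<sigma> k" "mb \<sigma> i < mb \<sigma> j"
      using c121[OF P] by blast
    have ins: "i \<in> {1..n}" "j \<in> {1..n}" "k \<in> {1..n}" using ijk by auto
    let ?C = "blk \<sigma> i"
    have C: "?C \<in> \<sigma>" "i \<in> ?C" "k \<in> ?C" using Blk_mem_s3 ins Mb_eq_iff_s3 ijk(5) by metis+
    obtain a b where ab: "?C = {a..b}" using L C(1) unfolding layered_def by blast
    have "j \<in> ?C" using ab C ijk by auto
    then have "mb \<sigma> j = mb \<sigma> i" using Blk_eq_s3[OF C(1)] unfolding mb_def by simp
    then show False using ijk by simp
  qed
qed

end


lemma restr_mem: "D \<in> restr \<sigma> T \<longleftrightarrow> (\<exists>C\<in>\<sigma>. D = C \<inter> T \<and> C \<inter> T \<noteq> {})"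
  unfolding restr_def by blast

context
  fixes n :: nat and \<sigma> :: "nat set set"
  assumes P: "partition_on {1..n} \<sigma>"
begin

lemmas Mb_in_s4 = mb_in[OF P finite_atLeastAtMost]
lemmas Mb_le_s4 = mb_le[OF P finite_atLeastAtMost]
lemmas Mb_A_s4 = mb_A[OF P finite_atLeastAtMost]
lemmas Blk_mb_s4 = blk_mb[OF P finite_atLeastAtMost]
lemmas Mb_mb_s4 = mb_mb[OF P finite_atLeastAtMost]
lemmas Mb_eq_iff_s4 = mb_eq_iff[OF P finite_atLeastAtMost]
lemmas Mb_eq_blk_s4 = mb_eq_blk[OF P finite_atLeastAtMost]
lemmas Blk_mem_s4 = blk_mem[OF P]
lemmas Blk_eq_s4 = blk_eq[OF P]
lemmas Psub_s4 = part_sub[OF P]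
lemmas Pne_s4 = part_ne[OF P]
lemmas Pfin_s4 = blk_fin[OF P finite_atLeastAtMost]
lemmas finS_s4 = finP[OF P finite_atLeastAtMost]
lemmas MinS_s4 = Min_self[OF P]
lemmas MinC_s4 = MinC_in[OF P]
lemmas MinInj_s4 = Min_inj[OF P finite_atLeastAtMost]
lemmas BIless_s4 = blockidx_less[OF P finite_atLeastAtMost]

lemma Bidx_piece: "C \<in> \<sigma> \<Longrightarrow> C \<inter> T \<noteq> {} \<Longrightarrow> Bidx \<sigma> (C \<inter> T) = blockidx \<sigma> C"
  unfolding Bidx_def using block_of_sub[OF P, of C "C \<inter> T"] by simp

lemma char3_a: assumes k: "k \<le> n" and R1: "restr \<sigma> {1..k} = {{i} | i. i \<in> {1..k}}"
   and L: "layered (restr \<sigma> {k+1..n})"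
   and Dec: "\<forall>D\<in>restr \<sigma> {k+1..n}. \<forall>D'\<in>restr \<sigma> {k+1..n}. Min D < Min D' \<longrightarrow> Bidx \<sigma> D > Bidx \<sigma> D'"
  shows "\<not> contains (rgf \<sigma> n) [1,1,2]"
proof
  assume "contains (rgf \<sigma> n) [1,1,2]"
  then obtain i j l where ijl: "1 \<le> i" "i < j" "j < l" "l \<le> n" "mb \<sigma> i = mb \<sigma> j" "mb \<sigma> j < mb \<sigma> l"
    using c112[OF P] by blast
  have ins: "i \<in> {1..n}" "j \<in> {1..n}" "l \<in> {1..n}" using ijl by auto
  have bij: "blk \<sigma> i = blk \<sigma> j" using Mb_eq_iff_s4[OF ins(1) ins(2)] ijl(5) by simp
  have bjl: "blk \<sigma> j \<noteq> blk \<sigma> l" using Mb_eq_iff_s4[OF ins(2) ins(3)] ijl(6) by simp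
  show False
  proof (cases "j \<le> k")
    case True
    let ?C = "blk \<sigma> j"
    have C: "?C \<in> \<sigma>" "i \<in> ?C" "j \<in> ?C" using Blk_mem_s4[OF ins(1)] Blk_mem_s4[OF ins(2)] bij by auto
    have "?C \<inter> {1..k} \<in> restr \<sigma> {1..k}" using C True ijl unfolding restr_mem by (intro bexI[of _ ?C]) auto
    then obtain m where "?C \<inter> {1..k} = {m}" using R1 by blast
    moreover have "i \<in> ?C \<inter> {1..k}" "j \<in> ?C \<inter> {1..k}" using C True ijl by auto
    ultimately show False using ijl(2) by auto
  next
    case False
    let ?T = "{k+1..n}"
    let ?C = "blk \<sigma> j" and ?C' = "blk \<sigma> l"
    have C: "?C \<in> \<sigma>" "j \<in> ?C" "?C' \<in> \<sigma>" "l \<in> ?C'" using Blk_mem_s4[OF ins(2)] Blk_mem_s4[OF ins(3)] by auto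
    have jT: "j \<in> ?T" "l \<in> ?T" using False ijl by auto
    have ne: "?C \<inter> ?T \<noteq> {}" "?C' \<inter> ?T \<noteq> {}" using C jT by auto
    have D1: "?C \<inter> ?T \<in> restr \<sigma> ?T" unfolding restr_mem by (rule bexI[of _ ?C]) (use C ne in auto)
    have D2: "?C' \<inter> ?T \<in> restr \<sigma> ?T" unfolding restr_mem by (rule bexI[of _ ?C']) (use C ne in auto)
    note D = D1 D2
    obtain a b where ab: "?C' \<inter> ?T = {a..b}" using L D(2) unfolding layered_def by blast
    have fD: "finite (?C \<inter> ?T)" "finite (?C' \<inter> ?T)" by auto
    have mD: "Min (?C \<inter> ?T) \<in> ?C \<inter> ?T" "Min (?C' \<inter> ?T) \<in> ?C' \<inter> ?T" using Min_in[OF fD(1) ne(1)] Min_in[OF fD(2) ne(2)] by auto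
    have mj: "Min (?C \<inter> ?T) \<le> j" using fD C jT by (auto intro!: Min_le)
    have disj: "?C \<inter> ?C' = {}" using P C bjl unfolding partition_on_def disjoint_def by blast
    have "Min (?C \<inter> ?T) < Min (?C' \<inter> ?T)"
    proof (rule ccontr)
      assume "\<not> ?thesis"
      then have "Min (?C' \<inter> ?T) \<le> Min (?C \<inter> ?T)" by simp
      moreover have "a \<le> Min (?C' \<inter> ?T)" using mD(2) ab by auto
      ultimately have "a \<le> j" using mj by linarith
      moreover have "l \<in> {a..b}" using ab C jT by blast
      ultimately have "a \<le> j" "j \<le> b" using ijl(3) by auto
      then have "j \<in> ?C' \<inter> ?T" unfolding ab by simp
      then have "j \<in> ?C'" by simp
      then show False using disj C by auto
    qed
    then have "Bidx \<sigma> (?C' \<inter> ?T) < Bidx \<sigma> (?C \<inter> ?T)" using Dec[rule_format, OF D1 D2] by simp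
    then have "blockidx \<sigma> ?C' < blockidx \<sigma> ?C" using Bidx_piece[OF C(1) ne(1)] Bidx_piece[OF C(3) ne(2)] by simp
    then have "Min ?C' < Min ?C" using BIless_s4[OF C(3) C(1)] by simp
    then show False using ijl unfolding mb_def by simp
  qed
qed

lemma blk_of_mb: assumes x: "x \<in> {1..n}" and C: "C \<in> \<sigma>" and m: "mb \<sigma> x = Min C" shows "x \<in> C"
proof -
  have "mb \<sigma> x \<in> blk \<sigma> x" using Mb_in_s4[OF x] .
  moreover have "Min C \<in> C" using MinC_s4[OF C] .
  ultimately have "blk \<sigma> x = C" using part_unique[OF P Blk_mem_s4(1)[OF x] C] m by simp
  then show ?thesis using Blk_mem_s4(2)[OF x] by simp
qed

lemma piece_Min: assumes C: "C \<in> \<sigma>" and ne: "C \<inter> T \<noteq> {}" shows "Min (C \<inter> T) \<in> C \<inter> T" "mb \<sigma> (Min (C \<inter> T)) = Min C"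
proof -
  have f: "finite (C \<inter> T)" using Pfin_s4[OF C] by simp
  show m: "Min (C \<inter> T) \<in> C \<inter> T" using Min_in[OF f ne] .
  show "mb \<sigma> (Min (C \<inter> T)) = Min C" using Mb_eq_blk_s4[OF _ C] m Psub_s4[OF C] by blast
qed

lemma char3_b: assumes np0: "\<not> contains (rgf \<sigma> n) [1,1,2]"
  shows "\<exists>k\<le>n. restr \<sigma> {1..k} = {{i} | i. i \<in> {1..k}} \<and> layered (restr \<sigma> {k+1..n})
     \<and> (\<forall>D\<in>restr \<sigma> {k+1..n}. \<forall>D'\<in>restr \<sigma> {k+1..n}. Min D < Min D' \<longrightarrow> Bidx \<sigma> D > Bidx \<sigma> D')"
proof -
  have np: "\<not> (mb \<sigma> j < mb \<sigma> l)" if "1 \<le> i" "i < j" "j < l" "l \<le> n" "mb \<sigma> i = mb \<sigma> j" for i j l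
    using np0 c112[OF P] that by blast
  have step: "mb \<sigma> y \<le> mb \<sigma> x" if x: "x \<in> {1..n}" "mb \<sigma> x < x" "x < y" "y \<le> n" for x y
  proof -
    have "1 \<le> mb \<sigma> x" using Mb_A_s4[OF x(1)] by simp
    then show ?thesis using np[of "mb \<sigma> x" x y] x Mb_mb_s4[OF x(1)] by simp
  qed
  have main: "restr \<sigma> {1..k} = {{i} | i. i \<in> {1..k}} \<and> layered (restr \<sigma> {k+1..n})
     \<and> (\<forall>D\<in>restr \<sigma> {k+1..n}. \<forall>D'\<in>restr \<sigma> {k+1..n}. Min D < Min D' \<longrightarrow> Bidx \<sigma> D > Bidx \<sigma> D')"
    if kn: "k \<le> n" and fx: "\<And>x. x \<in> {1..k} \<Longrightarrow> mb \<sigma> x = x"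
      and dec: "\<And>x y. k < x \<Longrightarrow> x \<le> y \<Longrightarrow> y \<le> n \<Longrightarrow> mb \<sigma> y \<le> mb \<sigma> x" for k
  proof (intro conjI)
    show "restr \<sigma> {1..k} = {{i} | i. i \<in> {1..k}}"
    proof
      show "restr \<sigma> {1..k} \<subseteq> {{i} | i. i \<in> {1..k}}"
      proof
        fix D assume "D \<in> restr \<sigma> {1..k}"
        then obtain C where C: "C \<in> \<sigma>" "D = C \<inter> {1..k}" "C \<inter> {1..k} \<noteq> {}" unfolding restr_mem by blast
        then obtain x where x: "x \<in> D" by blast
        have "D = {x}"
        proof safe
          fix y assume y: "y \<in> D"
          have "mb \<sigma> y = Min C" "mb \<sigma> x = Min C" using Mb_eq_blk_s4[OF _ C(1)] x y C(2) kn by auto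
          moreover have "mb \<sigma> y = y" "mb \<sigma> x = x" using fx x y C(2) by auto
          ultimately show "y = x" by simp
        qed (use x in auto)
        then show "D \<in> {{i} | i. i \<in> {1..k}}" using x C(2) by auto
      qed
    next
      show "{{i} | i. i \<in> {1..k}} \<subseteq> restr \<sigma> {1..k}"
      proof
        fix D assume "D \<in> {{i} | i. i \<in> {1..k}}"
        then obtain i where i: "D = {i}" "i \<in> {1..k}" by blast
        have iA: "i \<in> {1..n}" using i kn by auto
        let ?C = "blk \<sigma> i"
        have "?C \<inter> {1..k} = {i}"
        proof safe
          fix y assume y: "y \<in> ?C" "y \<in> {1..k}"
          have yA: "y \<in> {1..n}" using y kn by auto
          have "mb \<sigma> y = mb \<sigma> i" using Mb_eq_iff_s4[OF yA iA] Blk_eq_s4[OF Blk_mem_s4(1)[OF iA] y(1)] by simp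
          then show "y = i" using fx y(2) i(2) by simp
        qed (use Blk_mem_s4[OF iA] i in auto)
        then show "D \<in> restr \<sigma> {1..k}" unfolding restr_mem using i Blk_mem_s4[OF iA] by (intro bexI[of _ ?C]) auto
      qed
    qed
  next
    show "layered (restr \<sigma> {k+1..n})" unfolding layered_def
    proof
      fix D assume "D \<in> restr \<sigma> {k+1..n}"
      then obtain C where C: "C \<in> \<sigma>" "D = C \<inter> {k+1..n}" "C \<inter> {k+1..n} \<noteq> {}" unfolding restr_mem by blast
      have fD: "finite D" "D \<noteq> {}" using C Pfin_s4 by auto
      have "D = {Min D..Max D}"
      proof
        show "D \<subseteq> {Min D..Max D}" using fD by (simp add: subset_iff)
      next
        show "{Min D..Max D} \<subseteq> D"
        proof
          fix x assume x: "x \<in> {Min D..Max D}"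
          have mM: "Min D \<in> D" "Max D \<in> D" using Min_in[OF fD] Max_in[OF fD] by auto
          have xT: "x \<in> {k+1..n}" using mM x C(2) by auto
          have xA: "x \<in> {1..n}" using xT by auto
          have e1: "mb \<sigma> (Min D) = Min C" "mb \<sigma> (Max D) = Min C"
            using Mb_eq_blk_s4[OF _ C(1)] mM C(2) by auto
          have "mb \<sigma> x \<le> mb \<sigma> (Min D)" using dec[of "Min D" x] x xT mM C(2) by auto
          moreover have "mb \<sigma> (Max D) \<le> mb \<sigma> x" using dec[of x "Max D"] x xT mM C(2) by auto
          ultimately have "mb \<sigma> x = Min C" using e1 by simp
          then have "x \<in> C" using blk_of_mb[OF xA C(1)] by simp
          then show "x \<in> D" using C(2) xT by simp
        qed
      qed
      then show "\<exists>a b. D = {a..b}" by blast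
    qed
  next
    show "\<forall>D\<in>restr \<sigma> {k+1..n}. \<forall>D'\<in>restr \<sigma> {k+1..n}. Min D < Min D' \<longrightarrow> Bidx \<sigma> D > Bidx \<sigma> D'"
    proof (intro ballI impI)
      fix D D' assume D: "D \<in> restr \<sigma> {k+1..n}" and D': "D' \<in> restr \<sigma> {k+1..n}" and lt: "Min D < Min D'"
      obtain C where C: "C \<in> \<sigma>" "D = C \<inter> {k+1..n}" "C \<inter> {k+1..n} \<noteq> {}" using D unfolding restr_mem by blast
      obtain C' where C': "C' \<in> \<sigma>" "D' = C' \<inter> {k+1..n}" "C' \<inter> {k+1..n} \<noteq> {}" using D' unfolding restr_mem by blast
      have m: "Min D \<in> C \<inter> {k+1..n}" "mb \<sigma> (Min D) = Min C" using piece_Min[OF C(1) C(3)] C(2) by auto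
      have m': "Min D' \<in> C' \<inter> {k+1..n}" "mb \<sigma> (Min D') = Min C'" using piece_Min[OF C'(1) C'(3)] C'(2) by auto
      have "Min C' \<le> Min C" using dec[of "Min D" "Min D'"] m m' lt by auto
      moreover have "C \<noteq> C'"
      proof
        assume "C = C'" then have "D = D'" using C(2) C'(2) by simp
        then show False using lt by simp
      qed
      then have "Min C \<noteq> Min C'" using MinInj_s4[OF C(1) C'(1)] by auto
      ultimately have "Min C' < Min C" by simp
      then have "blockidx \<sigma> C' < blockidx \<sigma> C" using BIless_s4[OF C'(1) C(1)] by simp
      then show "Bidx \<sigma> D > Bidx \<sigma> D'" using Bidx_piece[OF C(1) C(3)] Bidx_piece[OF C'(1) C'(3)] C(2) C'(2) by simp
    qed
  qed
  show ?thesis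
  proof (cases "\<forall>x\<in>{1..n}. mb \<sigma> x = x")
    case True
    have "restr \<sigma> {1..n} = {{i} | i. i \<in> {1..n}} \<and> layered (restr \<sigma> {n+1..n})
     \<and> (\<forall>D\<in>restr \<sigma> {n+1..n}. \<forall>D'\<in>restr \<sigma> {n+1..n}. Min D < Min D' \<longrightarrow> Bidx \<sigma> D > Bidx \<sigma> D')"
      using True by (intro main) auto
    then show ?thesis by blast
  next
    case False
    define p where "p = (LEAST x. x \<in> {1..n} \<and> mb \<sigma> x \<noteq> x)"
    have ex: "\<exists>x. x \<in> {1..n} \<and> mb \<sigma> x \<noteq> x" using False by blast
    have p: "p \<in> {1..n}" "mb \<sigma> p \<noteq> p" using LeastI_ex[OF ex] unfolding p_def by auto
    have below: "mb \<sigma> x = x" if "x \<in> {1..n}" "x < p" for x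
      using not_less_Least[of x "\<lambda>x. x \<in> {1..n} \<and> mb \<sigma> x \<noteq> x"] that unfolding p_def by blast
    have mp: "mb \<sigma> p < p" using p Mb_le_s4[OF p(1)] by simp
    define k where "k = p - 1"
    have kp: "k + 1 = p" "k \<le> n" using p unfolding k_def by auto
    have big: "mb \<sigma> y < y \<and> mb \<sigma> y < p" if "y \<in> {k+1..n}" for y
    proof (cases "y = p")
      case True then show ?thesis using mp by simp
    next
      case False
      then have "p < y" using that kp by auto
      then have "mb \<sigma> y \<le> mb \<sigma> p" using step[OF p(1) mp] that by auto
      then show ?thesis using mp \<open>p < y\<close> by simp
    qed
    have "restr \<sigma> {1..k} = {{i} | i. i \<in> {1..k}} \<and> layered (restr \<sigma> {k+1..n})
     \<and> (\<forall>D\<in>restr \<sigma> {k+1..n}. \<forall>D'\<in>restr \<sigma> {k+1..n}. Min D < Min D' \<longrightarrow> Bidx \<sigma> D > Bidx \<sigma> D')"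
    proof (rule main)
      show "k \<le> n" using kp by simp
      show "mb \<sigma> x = x" if "x \<in> {1..k}" for x using below[of x] that kp by auto
      show "mb \<sigma> y \<le> mb \<sigma> x" if "k < x" "x \<le> y" "y \<le> n" for x y
      proof (cases "x = y")
        case False
        have xA: "x \<in> {1..n}" using that by auto
        have "mb \<sigma> x < x" using big[of x] that by auto
        then show ?thesis using step[OF xA] that False by simp
      qed simp
    qed
    then show ?thesis using kp by blast
  qed
qed

end


definition aM :: "nat \<Rightarrow> nat" where
  "aM m = (\<Sum>i\<le>m. (m choose (2*i)) * dfact i)"

lemma aM_big: assumes "m \<le> N" shows "(\<Sum>i\<le>N. (m choose (2*i)) * dfact i) = aM m"
  unfolding aM_def
proof (rule sum.mono_neutral_right)
  show "\<forall>i\<in>{..N} - {..m}. (m choose (2*i)) * dfact i = 0" by auto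
qed (use assms in auto)

lemma dfact_Suc: "dfact (Suc i) = (2*i+1) * dfact i"
  unfolding dfact_def by simp

lemma aM_rec: "aM (Suc m) = aM m + m * aM (m - 1)"
proof (cases m)
  case 0
  then show ?thesis by (simp add: aM_def dfact_def)
next
  case (Suc k)
  have "aM (Suc (Suc k)) = (\<Sum>i\<le>Suc (Suc k). (Suc (Suc k) choose (2*i)) * dfact i)"
    unfolding aM_def ..
  also have "\<dots> = 1 + (\<Sum>i\<le>Suc k. (Suc (Suc k) choose (2*Suc i)) * dfact (Suc i))"
    by (subst sum.atMost_Suc_shift) (simp add: dfact_def)
  also have "\<dots> = 1 + (\<Sum>i\<le>Suc k. (Suc k choose (2*Suc i)) * dfact (Suc i))
                    + (\<Sum>i\<le>Suc k. (Suc k choose Suc (2*i)) * dfact (Suc i))"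
    by (simp add: sum.distrib algebra_simps)
  also have "1 + (\<Sum>i\<le>Suc k. (Suc k choose (2*Suc i)) * dfact (Suc i)) = aM (Suc k)"
  proof -
    have "1 + (\<Sum>i\<le>Suc k. (Suc k choose (2*Suc i)) * dfact (Suc i)) = (\<Sum>i\<le>Suc (Suc k). (Suc k choose (2*i)) * dfact i)"
      by (subst (2) sum.atMost_Suc_shift) (simp add: dfact_def)
    also have "\<dots> = aM (Suc k)" by (rule aM_big) simp
    finally show ?thesis .
  qed
  also have "(\<Sum>i\<le>Suc k. (Suc k choose Suc (2*i)) * dfact (Suc i)) = (\<Sum>i\<le>Suc k. Suc k * ((k choose (2*i)) * dfact i))"
  proof (rule sum.cong)
    fix i
    have "(Suc k choose Suc (2*i)) * dfact (Suc i) = (Suc (2*i) * (Suc k choose Suc (2*i))) * dfact i"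
      by (simp add: dfact_Suc algebra_simps del: binomial_Suc_Suc)
    also have "\<dots> = Suc k * (k choose (2*i)) * dfact i" by (simp only: Suc_times_binomial)
    finally show "(Suc k choose Suc (2*i)) * dfact (Suc i) = Suc k * ((k choose (2*i)) * dfact i)" by (simp add: algebra_simps del: binomial_Suc_Suc)
  qed simp
  also have "\<dots> = Suc k * (\<Sum>i\<le>Suc k. (k choose (2*i)) * dfact i)"
    by (rule sum_distrib_left[symmetric])
  also have "\<dots> = Suc k * aM k" using aM_big[of k "Suc k"] by simp
  finally show ?thesis using Suc by simp
qed


lemma P_rem: assumes "partition_on A \<sigma>" "C \<in> \<sigma>" shows "partition_on (A - C) (\<sigma> - {C})"
proof -
  have d: "disjnt C (\<Union>(\<sigma> - {C}))"
    using assms unfolding partition_on_def disjoint_def disjnt_def by blast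
  have "partition_on A (insert C (\<sigma> - {C}))" using assms by (simp add: insert_absorb)
  then show ?thesis using partition_on_insert[OF d] by blast
qed

lemma P_addS: assumes "partition_on A \<tau>" "x \<notin> A" shows "partition_on (insert x A) (insert {x} \<tau>)"
proof -
  have d: "disjnt {x} (\<Union>\<tau>)" using assms partition_onD1 by fastforce
  have "insert x A - {x} = A" using assms by auto
  then show ?thesis using partition_on_insert[OF d] assms by simp
qed

lemma P_addB: assumes "partition_on A \<tau>" "C \<in> \<tau>" "x \<notin> A" shows "partition_on (insert x A) (insert (insert x C) (\<tau> - {C}))"
proof -
  have r: "partition_on (A - C) (\<tau> - {C})" using P_rem[OF assms(1,2)] .
  have u: "\<Union>(\<tau> - {C}) = A - C" using partition_onD1[OF r] by simp
  have d: "disjnt (insert x C) (\<Union>(\<tau> - {C}))" using u assms(3) by (auto simp: disjnt_def)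
  have CA: "C \<subseteq> A" using assms(1,2) partition_onD1 by blast
  have "insert x A - insert x C = A - C" using assms(3) CA by auto
  then show ?thesis using partition_on_insert[OF d] r CA by auto
qed

lemma P_delB: assumes "partition_on (insert x A) \<sigma>" "x \<notin> A" "C \<in> \<sigma>" "x \<in> C" "C \<noteq> {x}"
  shows "partition_on A (insert (C - {x}) (\<sigma> - {C}))"
proof -
  have r: "partition_on (insert x A - C) (\<sigma> - {C})" using P_rem[OF assms(1,3)] .
  have u: "\<Union>(\<sigma> - {C}) = insert x A - C" using partition_onD1[OF r] by simp
  have d: "disjnt (C - {x}) (\<Union>(\<sigma> - {C}))" using u by (auto simp: disjnt_def)
  have CA: "C \<subseteq> insert x A" using assms(1,3) partition_onD1 by blast
  have e: "A - (C - {x}) = insert x A - C" using assms(2,4) CA by auto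
  have ne: "C - {x} \<noteq> {}" using assms(4,5) by auto
  show ?thesis using partition_on_insert[OF d] r CA e ne assms(2) by auto
qed


lemma card_S1: assumes "n \<ge> 1" shows "card {A. 1 \<in> A \<and> A \<subseteq> {1..n::nat}} = 2^(n-1)"
proof -
  have e: "{A. 1 \<in> A \<and> A \<subseteq> {1..n::nat}} = insert 1 ` Pow {2..n}"
  proof
    show "{A. 1 \<in> A \<and> A \<subseteq> {1..n::nat}} \<subseteq> insert 1 ` Pow {2..n}"
    proof
      fix A assume A: "A \<in> {A. 1 \<in> A \<and> A \<subseteq> {1..n::nat}}"
      then have "A = insert 1 (A - {1})" "A - {1} \<in> Pow {2..n}" by auto
      then show "A \<in> insert 1 ` Pow {2..n}" by blast
    qed
  next
    show "insert 1 ` Pow {2..n} \<subseteq> {A. 1 \<in> A \<and> A \<subseteq> {1..n::nat}}" using assms by auto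
  qed
  have i: "inj_on (insert (1::nat)) (Pow {2..n})"
    unfolding inj_on_def by (metis PowD atLeastAtMost_iff insert_ident not_one_le_zero numeral_le_one_iff semiring_norm(69) subsetD)
  have "card (insert 1 ` Pow {2..n}) = card (Pow {2..n::nat})" using card_image[OF i] .
  also have "\<dots> = 2^(n-1)" by (simp add: card_Pow)
  finally show ?thesis using e by simp
qed

context
  fixes n :: nat
  assumes n1: "n \<ge> 1"
begin

definition h1 :: "nat set \<Rightarrow> nat set set" where
  "h1 A = insert A (if A = {1..n} then {} else {{1..n} - A})"

definition h4 :: "nat set \<Rightarrow> nat set set" where
  "h4 A = insert A ((\<lambda>x. {x}) ` ({1..n} - A))"

lemma one_in: "(1::nat) \<in> {1..n}" using n1 by simp

lemma count1: "card {\<sigma> \<in> Pi_n n. card \<sigma> \<le> 2} = 2^(n-1)"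
proof -
  let ?S = "{A. 1 \<in> A \<and> A \<subseteq> {1..n::nat}}"
  have inj: "inj_on h1 ?S"
  proof (rule inj_onI)
    fix A B assume A: "A \<in> ?S" and B: "B \<in> ?S" and e: "h1 A = h1 B"
    have "A \<in> h1 A" unfolding h1_def by simp
    then have "A \<in> h1 B" using e by simp
    then have "A = B \<or> A = {1..n} - B" unfolding h1_def by (auto split: if_splits)
    then show "A = B" using A B by auto
  qed
  have img: "{\<sigma> \<in> Pi_n n. card \<sigma> \<le> 2} = h1 ` ?S"
  proof
    show "{\<sigma> \<in> Pi_n n. card \<sigma> \<le> 2} \<subseteq> h1 ` ?S"
    proof
      fix \<sigma> assume s: "\<sigma> \<in> {\<sigma> \<in> Pi_n n. card \<sigma> \<le> 2}"
      then have P: "partition_on {1..n} \<sigma>" and c: "card \<sigma> \<le> 2" by (auto simp: Pi_n_iff)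
      let ?C = "blk \<sigma> 1"
      have C: "?C \<in> \<sigma>" "1 \<in> ?C" using blk_mem[OF P one_in] by auto
      have CA: "?C \<subseteq> {1..n}" using part_sub[OF P C(1)] .
      have fin: "finite \<sigma>" using finP[OF P] by simp
      have "card (\<sigma> - {?C}) \<le> 1" using c C(1) fin by (simp add: card_Diff_singleton)
      then have "\<sigma> - {?C} = {} \<or> (\<exists>D. \<sigma> - {?C} = {D})"
        using fin by (metis card_0_eq card_1_singletonE finite_Diff le_eq_less_or_eq less_one)
      then have "\<sigma> = h1 ?C"
      proof
        assume "\<sigma> - {?C} = {}"
        then have sC: "\<sigma> = {?C}" using C(1) by auto
        have "{1..n} = \<Union>\<sigma>" by (rule partition_onD1[OF P])
        also have "\<dots> = \<Union>{?C}" using arg_cong[OF sC, of Union] .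
        also have "\<dots> = ?C" by simp
        finally have "?C = {1..n}" by simp
        then show ?thesis using sC unfolding h1_def by simp
      next
        assume "\<exists>D. \<sigma> - {?C} = {D}"
        then obtain D where D: "\<sigma> - {?C} = {D}" by blast
        then have sD: "\<sigma> = {?C, D}" "D \<in> \<sigma>" "D \<noteq> ?C" using C(1) by auto
        have "?C \<inter> D = {}" using P sD C(1) unfolding partition_on_def disjoint_def by blast
        moreover have "?C \<union> D = {1..n}"
        proof -
          have "{1..n} = \<Union>\<sigma>" by (rule partition_onD1[OF P])
          also have "\<dots> = \<Union>{?C, D}" using arg_cong[OF sD(1), of Union] .
          finally show ?thesis by simp
        qed
        ultimately have DC: "D = {1..n} - ?C" by blast
        have "D \<noteq> {}" using part_ne[OF P sD(2)] .
        then have "?C \<noteq> {1..n}" using DC by auto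
        then show ?thesis using sD DC unfolding h1_def by auto
      qed
      moreover have "?C \<in> ?S" using C CA by auto
      ultimately show "\<sigma> \<in> h1 ` ?S" by blast
    qed
  next
    show "h1 ` ?S \<subseteq> {\<sigma> \<in> Pi_n n. card \<sigma> \<le> 2}"
    proof
      fix \<sigma> assume "\<sigma> \<in> h1 ` ?S"
      then obtain A where A: "A \<in> ?S" "\<sigma> = h1 A" by blast
      show "\<sigma> \<in> {\<sigma> \<in> Pi_n n. card \<sigma> \<le> 2}"
      proof (cases "A = {1..n}")
        case True
        then have "\<sigma> = {{1..n}}" using A unfolding h1_def by simp
        then show ?thesis using partition_on_space[of "{1..n::nat}"] n1 by (simp add: Pi_n_iff)
      next
        case False
        then have s: "\<sigma> = {A, {1..n} - A}" using A unfolding h1_def by simp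
        have d: "disjnt A (\<Union>{{1..n} - A})" by (simp add: disjnt_def)
        have ne: "{1..n} - A \<noteq> {}" using A False by auto
        have "partition_on {1..n} (insert A {{1..n} - A})"
          unfolding partition_on_insert[OF d] using partition_on_space[OF ne] A by auto
        moreover have "card {A, {1..n} - A} \<le> 2" by (simp add: card_insert_le_m1)
        ultimately show ?thesis using s by (simp add: Pi_n_iff)
      qed
    qed
  qed
  show ?thesis using card_image[OF inj] img card_S1[OF n1] by simp
qed

lemma F4_eq: "{\<sigma> \<in> Pi_n n. \<forall>C\<in>\<sigma>. blockidx \<sigma> C \<ge> 2 \<longrightarrow> card C = 1} = {\<sigma> \<in> Pi_n n. \<forall>C\<in>\<sigma>. 1 \<notin> C \<longrightarrow> card C = 1}"
proof -
  have "(blockidx \<sigma> C \<ge> 2) = (1 \<notin> C)" if P: "partition_on {1..n} \<sigma>" and C: "C \<in> \<sigma>" for \<sigma> C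
  proof -
    have "(blockidx \<sigma> C \<ge> 2) = (Min C \<noteq> 1)" using blockidx_ge2[OF P C] .
    moreover have "Min C \<in> C" using MinC_in[OF P C] .
    moreover have "1 \<in> C \<Longrightarrow> Min C \<le> 1" using Min_le[OF blk_fin[OF P finite_atLeastAtMost C]] by simp
    moreover have "Min C \<ge> 1" using part_sub[OF P C] \<open>Min C \<in> C\<close> by auto
    ultimately show ?thesis by auto
  qed
  then show ?thesis by (auto simp: Pi_n_iff)
qed

lemma count4: "card {\<sigma> \<in> Pi_n n. \<forall>C\<in>\<sigma>. blockidx \<sigma> C \<ge> 2 \<longrightarrow> card C = 1} = 2^(n-1)"
proof -
  let ?S = "{A. 1 \<in> A \<and> A \<subseteq> {1..n::nat}}"
  have inj: "inj_on h4 ?S"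
  proof (rule inj_onI)
    fix A B assume A: "A \<in> ?S" and B: "B \<in> ?S" and e: "h4 A = h4 B"
    have "A \<in> h4 A" unfolding h4_def by simp
    then have "A \<in> h4 B" using e by simp
    then have "A = B \<or> (\<exists>x. x \<notin> B \<and> A = {x})" unfolding h4_def by auto
    then show "A = B" using A B by auto
  qed
  have img: "{\<sigma> \<in> Pi_n n. \<forall>C\<in>\<sigma>. 1 \<notin> C \<longrightarrow> card C = 1} = h4 ` ?S"
  proof
    show "{\<sigma> \<in> Pi_n n. \<forall>C\<in>\<sigma>. 1 \<notin> C \<longrightarrow> card C = 1} \<subseteq> h4 ` ?S"
    proof
      fix \<sigma> assume s: "\<sigma> \<in> {\<sigma> \<in> Pi_n n. \<forall>C\<in>\<sigma>. 1 \<notin> C \<longrightarrow> card C = 1}"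
      then have P: "partition_on {1..n} \<sigma>" and c: "\<And>C. C \<in> \<sigma> \<Longrightarrow> 1 \<notin> C \<Longrightarrow> card C = 1" by (auto simp: Pi_n_iff)
      let ?C = "blk \<sigma> 1"
      have C: "?C \<in> \<sigma>" "1 \<in> ?C" using blk_mem[OF P one_in] by auto
      have CA: "?C \<subseteq> {1..n}" using part_sub[OF P C(1)] .
      have "\<sigma> = h4 ?C"
      proof
        show "\<sigma> \<subseteq> h4 ?C"
        proof
          fix D assume D: "D \<in> \<sigma>"
          show "D \<in> h4 ?C"
          proof (cases "D = ?C")
            case False
            then have "1 \<notin> D" using blk_eq[OF P D] by blast
            then obtain x where x: "D = {x}" using c[OF D] card_1_singletonE by blast
            have "x \<in> {1..n}" using part_sub[OF P D] x by auto
            moreover have "x \<notin> ?C" using False x blk_eq[OF P C(1)] D by (metis blk_eq[OF P D] insertI1)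
            ultimately show ?thesis using x unfolding h4_def by auto
          qed (simp add: h4_def)
        qed
      next
        show "h4 ?C \<subseteq> \<sigma>"
        proof
          fix D assume "D \<in> h4 ?C"
          then have "D = ?C \<or> (\<exists>x \<in> {1..n} - ?C. D = {x})" unfolding h4_def by auto
          then show "D \<in> \<sigma>"
          proof
            assume "\<exists>x \<in> {1..n} - ?C. D = {x}"
            then obtain x where x: "x \<in> {1..n}" "x \<notin> ?C" "D = {x}" by blast
            have B: "blk \<sigma> x \<in> \<sigma>" "x \<in> blk \<sigma> x" using blk_mem[OF P x(1)] by auto
            have "1 \<notin> blk \<sigma> x"
            proof
              assume "1 \<in> blk \<sigma> x"
              then have "blk \<sigma> 1 = blk \<sigma> x" using blk_eq[OF P B(1)] by blast
              then show False using B(2) x(2) by simp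
            qed
            then have "card (blk \<sigma> x) = 1" using c B(1) by blast
            then have "blk \<sigma> x = {x}" using B(2) by (metis card_1_singletonE singletonD)
            then show "D \<in> \<sigma>" using B x by simp
          qed (use C in simp)
        qed
      qed
      moreover have "?C \<in> ?S" using C CA by auto
      ultimately show "\<sigma> \<in> h4 ` ?S" by blast
    qed
  next
    show "h4 ` ?S \<subseteq> {\<sigma> \<in> Pi_n n. \<forall>C\<in>\<sigma>. 1 \<notin> C \<longrightarrow> card C = 1}"
    proof
      fix \<sigma> assume "\<sigma> \<in> h4 ` ?S"
      then obtain A where A: "A \<in> ?S" "\<sigma> = h4 A" by blast
      have d: "disjnt A (\<Union>((\<lambda>x. {x}) ` ({1..n} - A)))" by (auto simp: disjnt_def)
      have "partition_on {1..n} (insert A ((\<lambda>x. {x}) ` ({1..n} - A)))"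
        unfolding partition_on_insert[OF d] using partition_on_singletons[of "{1..n} - A"] A by auto
      moreover have "\<forall>C\<in>\<sigma>. 1 \<notin> C \<longrightarrow> card C = 1" using A unfolding h4_def by auto
      ultimately show "\<sigma> \<in> {\<sigma> \<in> Pi_n n. \<forall>C\<in>\<sigma>. 1 \<notin> C \<longrightarrow> card C = 1}"
        using A unfolding h4_def by (simp add: Pi_n_iff)
    qed
  qed
  show ?thesis unfolding F4_eq using card_image[OF inj] img card_S1[OF n1] by simp
qed

end


lemma Pi1: "Pi_n 1 = {{{1}}}"
proof -
  have "partition_on {1::nat} \<sigma> \<longleftrightarrow> \<sigma> = {{1}}" for \<sigma>
  proof
    assume P: "partition_on {1::nat} \<sigma>"
    have "\<forall>C\<in>\<sigma>. C = {1}"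
    proof
      fix C assume C: "C \<in> \<sigma>"
      have "C \<subseteq> {1}" using part_sub[OF P C] .
      moreover have "C \<noteq> {}" using part_ne[OF P C] .
      ultimately show "C = {1}" by auto
    qed
    moreover have "\<sigma> \<noteq> {}"
    proof
      assume e: "\<sigma> = {}"
      have "{1::nat} = \<Union>\<sigma>" by (rule partition_onD1[OF P])
      then show False unfolding e by simp
    qed
    ultimately show "\<sigma> = {{1}}" by (metis (no_types, lifting) ex_in_conv insertI1 set_eq_subset subsetI singletonD subset_antisym)
  qed (simp add: partition_on_space)
  then show ?thesis unfolding Pi_n_def by auto
qed

lemma finPi: "finite (Pi_n n)"
  unfolding Pi_n_def using finitely_many_partition_on[of "{1..n}"] by simp

lemma ins_Suc: "insert (Suc n) {1..n} = {1..Suc n}" by auto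

lemma notin_n: "Suc n \<notin> {1..n}" by simp

context
  fixes n :: nat
  assumes n1: "n \<ge> 1"
begin

definition addS :: "nat set set \<Rightarrow> nat set set" where
  "addS \<tau> = insert {Suc n} \<tau>"

definition addB :: "nat \<Rightarrow> nat set set \<Rightarrow> nat set set" where
  "addB m \<tau> = insert (insert (Suc n) (blk \<tau> m)) (\<tau> - {blk \<tau> m})"

definition delB :: "nat set set \<Rightarrow> nat set set" where
  "delB \<sigma> = insert (blk \<sigma> (Suc n) - {Suc n}) (\<sigma> - {blk \<sigma> (Suc n)})"

lemma addS_part: "partition_on {1..n} \<tau> \<Longrightarrow> partition_on {1..Suc n} (addS \<tau>)"
  unfolding addS_def using P_addS[OF _ notin_n] ins_Suc by metis

lemma addB_part: assumes "partition_on {1..n} \<tau>" "m \<in> {1..n}"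
  shows "partition_on {1..Suc n} (addB m \<tau>)" "insert (Suc n) (blk \<tau> m) \<in> addB m \<tau>"
    "blk (addB m \<tau>) (Suc n) = insert (Suc n) (blk \<tau> m)"
proof -
  show p: "partition_on {1..Suc n} (addB m \<tau>)"
    unfolding addB_def using P_addB[OF assms(1) blk_mem(1)[OF assms] notin_n] ins_Suc by metis
  show i: "insert (Suc n) (blk \<tau> m) \<in> addB m \<tau>" unfolding addB_def by simp
  show "blk (addB m \<tau>) (Suc n) = insert (Suc n) (blk \<tau> m)" using blk_eq[OF p i] by simp
qed

lemma Suc_notin_blocks: "partition_on {1..n} \<tau> \<Longrightarrow> C \<in> \<tau> \<Longrightarrow> Suc n \<notin> C"
  using part_sub by fastforce

lemma delB_addB: assumes "partition_on {1..n} \<tau>" "m \<in> {1..n}" shows "delB (addB m \<tau>) = \<tau>"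
proof -
  let ?C = "blk \<tau> m"
  have C: "?C \<in> \<tau>" using blk_mem[OF assms] by simp
  have nC: "Suc n \<notin> ?C" using Suc_notin_blocks[OF assms(1) C] .
  have e1: "insert (Suc n) ?C - {Suc n} = ?C" using nC by simp
  have nin: "insert (Suc n) ?C \<notin> \<tau> - {?C}" using Suc_notin_blocks[OF assms(1)] by blast
  have e2: "addB m \<tau> - {insert (Suc n) ?C} = \<tau> - {?C}" unfolding addB_def using nin by auto
  show ?thesis unfolding delB_def addB_part(3)[OF assms] e1 e2 using C by (simp add: insert_absorb)
qed

lemma addB_delB: assumes P: "partition_on {1..Suc n} \<sigma>" and ne: "blk \<sigma> (Suc n) \<noteq> {Suc n}"
  and m: "m \<in> blk \<sigma> (Suc n) - {Suc n}"
  shows "partition_on {1..n} (delB \<sigma>)" "addB m (delB \<sigma>) = \<sigma>" "m \<in> {1..n}"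
proof -
  let ?B = "blk \<sigma> (Suc n)"
  have sn: "Suc n \<in> {1..Suc n}" by simp
  have B: "?B \<in> \<sigma>" "Suc n \<in> ?B" using blk_mem[OF P sn] by auto
  have P': "partition_on (insert (Suc n) {1..n}) \<sigma>" using P ins_Suc by simp
  show D: "partition_on {1..n} (delB \<sigma>)" unfolding delB_def using P_delB[OF P' notin_n B(1) B(2) ne] .
  have BA: "?B \<subseteq> {1..Suc n}" using part_sub[OF P B(1)] .
  show mA: "m \<in> {1..n}" using m BA by auto
  have Bm: "?B - {Suc n} \<in> delB \<sigma>" unfolding delB_def by simp
  have bm: "blk (delB \<sigma>) m = ?B - {Suc n}" using blk_eq[OF D Bm] m by simp
  have "?B - {Suc n} \<notin> \<sigma> - {?B}"
  proof
    assume a: "?B - {Suc n} \<in> \<sigma> - {?B}"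
    then have "?B - {Suc n} = ?B" using part_unique[OF P _ B(1), of "?B - {Suc n}" m] m by auto
    then show False using B(2) by auto
  qed
  then have e: "delB \<sigma> - {?B - {Suc n}} = \<sigma> - {?B}" unfolding delB_def by auto
  have "insert (Suc n) (?B - {Suc n}) = ?B" using B(2) by auto
  then show "addB m (delB \<sigma>) = \<sigma>" unfolding addB_def bm e using B(1) by (simp add: insert_absorb)
qed

lemma addS_inj: assumes "partition_on {1..n} \<tau>" shows "addS \<tau> - {{Suc n}} = \<tau>"
  unfolding addS_def using Suc_notin_blocks[OF assms] by auto

lemma addS_addB_disj: assumes "partition_on {1..n} \<tau>" "partition_on {1..n} \<tau>'" "m \<in> {1..n}"
  shows "addS \<tau> \<noteq> addB m \<tau>'"
proof
  assume e: "addS \<tau> = addB m \<tau>'"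
  have "{Suc n} \<in> addB m \<tau>'" using e unfolding addS_def by auto
  moreover have "blk (addB m \<tau>') (Suc n) = insert (Suc n) (blk \<tau>' m)" using addB_part(3)[OF assms(2,3)] .
  ultimately have "{Suc n} = insert (Suc n) (blk \<tau>' m)" using blk_eq[OF addB_part(1)[OF assms(2,3)]] by blast
  then show False using blk_mem(2)[OF assms(2,3)] assms(3) by auto
qed

end


lemma sing_lay: "\<exists>a b. {x::nat} = {a..b}" by (metis atLeastAtMost_singleton)

lemma layered_sub: "layered \<sigma> \<Longrightarrow> \<tau> \<subseteq> \<sigma> \<Longrightarrow> layered \<tau>"
  unfolding layered_def by blast

lemma count5_step: assumes n1: "n \<ge> 1"
  shows "card {\<sigma> \<in> Pi_n (Suc n). layered \<sigma>} = 2 * card {\<sigma> \<in> Pi_n n. layered \<sigma>}"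
proof -
  let ?L = "\<lambda>n. {\<sigma> \<in> Pi_n n. layered \<sigma>}"
  have nA: "n \<in> {1..n}" using n1 by simp
  have blkn: "\<exists>a. blk \<tau> n = {a..n} \<and> a \<le> n" if P: "partition_on {1..n} \<tau>" and L: "layered \<tau>" for \<tau>
  proof -
    have C: "blk \<tau> n \<in> \<tau>" "n \<in> blk \<tau> n" using blk_mem[OF P nA] by auto
    obtain a b where ab: "blk \<tau> n = {a..b}" using L C(1) unfolding layered_def by blast
    have "a \<le> n" "n \<le> b" using ab C(2) by auto
    moreover have "b \<in> blk \<tau> n" using ab \<open>a \<le> n\<close> \<open>n \<le> b\<close> by auto
    then have "b \<le> n" using part_sub[OF P C(1)] by auto
    ultimately show ?thesis using ab by (intro exI[of _ a]) auto
  qed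
  have lay_addS: "layered (addS n \<tau>)" if "layered \<tau>" for \<tau>
    using that unfolding layered_def addS_def[OF n1] by (auto intro: sing_lay)
  have lay_addB: "layered (addB n n \<tau>)" if P: "partition_on {1..n} \<tau>" and L: "layered \<tau>" for \<tau>
  proof -
    obtain a where a: "blk \<tau> n = {a..n}" "a \<le> n" using blkn[OF P L] by blast
    have "insert (Suc n) (blk \<tau> n) = {a..Suc n}" using a by auto
    then show ?thesis using L unfolding layered_def addB_def[OF n1] by (auto intro: exI[of _ a])
  qed
  have img: "?L (Suc n) = addS n ` ?L n \<union> addB n n ` ?L n"
  proof
    show "?L (Suc n) \<subseteq> addS n ` ?L n \<union> addB n n ` ?L n"
    proof
      fix \<sigma> assume s: "\<sigma> \<in> ?L (Suc n)"
      then have P: "partition_on {1..Suc n} \<sigma>" and L: "layered \<sigma>" by (auto simp: Pi_n_iff)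
      let ?B = "blk \<sigma> (Suc n)"
      have sn: "Suc n \<in> {1..Suc n}" by simp
      have B: "?B \<in> \<sigma>" "Suc n \<in> ?B" using blk_mem[OF P sn] by auto
      show "\<sigma> \<in> addS n ` ?L n \<union> addB n n ` ?L n"
      proof (cases "?B = {Suc n}")
        case True
        have P': "partition_on {1..n} (\<sigma> - {{Suc n}})"
          using P_rem[OF P, of "{Suc n}"] B(1) True by (simp add: atLeastAtMostSuc_conv)
        moreover have "layered (\<sigma> - {{Suc n}})" using layered_sub[OF L] by blast
        moreover have "addS n (\<sigma> - {{Suc n}}) = \<sigma>" unfolding addS_def[OF n1] using B(1) True by auto
        ultimately show ?thesis by (auto simp: Pi_n_iff)
      next
        case False
        obtain a b where ab: "?B = {a..b}" using L B(1) unfolding layered_def by blast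
        have "b \<le> Suc n" using ab B part_sub[OF P B(1)] by auto
        then have bS: "b = Suc n" using ab B(2) by auto
        have "a \<noteq> Suc n" using False ab bS by auto
        then have "a \<le> n" using ab B(2) by auto
        then have m: "n \<in> ?B - {Suc n}" using ab bS by auto
        note D = addB_delB[OF n1 P False m]
        have "layered (delB n \<sigma>)"
        proof -
          have e: "{a..Suc n} - {Suc n} = {a..n}" by auto
          have "?B - {Suc n} = {a..n}" using ab bS e by simp
          then show ?thesis using L unfolding layered_def delB_def[OF n1] by auto
        qed
        then have "delB n \<sigma> \<in> ?L n" using D(1) by (simp add: Pi_n_iff)
        then show ?thesis using D(2) by blast
      qed
    qed
  next
    show "addS n ` ?L n \<union> addB n n ` ?L n \<subseteq> ?L (Suc n)"
      using addS_part[OF n1] addB_part(1)[OF n1 _ nA] lay_addS lay_addB by (auto simp: Pi_n_iff)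
  qed
  have fin: "finite (?L n)" using finPi[of n] by simp
  have injS: "inj_on (addS n) (?L n)"
    by (rule inj_on_inverseI[of _ "\<lambda>\<sigma>. \<sigma> - {{Suc n}}"]) (use addS_inj[OF n1] in \<open>auto simp: Pi_n_iff\<close>)
  have injB: "inj_on (addB n n) (?L n)"
    by (rule inj_on_inverseI[of _ "delB n"]) (use delB_addB[OF n1 _ nA] in \<open>auto simp: Pi_n_iff\<close>)
  have disj: "addS n ` ?L n \<inter> addB n n ` ?L n = {}"
    using addS_addB_disj[OF n1 _ _ nA] by (auto simp: Pi_n_iff)
  have "card (?L (Suc n)) = card (addS n ` ?L n) + card (addB n n ` ?L n)"
    unfolding img by (rule card_Un_disjoint) (use fin disj in auto)
  also have "\<dots> = 2 * card (?L n)" using card_image[OF injS] card_image[OF injB] by simp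
  finally show ?thesis .
qed

lemma count5: "n \<ge> 1 \<Longrightarrow> card {\<sigma> \<in> Pi_n n. layered \<sigma>} = 2^(n-1)"
proof (induction n rule: dec_induct[of 1])
  case base
  have "layered {{1::nat}}" unfolding layered_def using sing_lay by auto
  then have "{\<sigma> \<in> Pi_n 1. layered \<sigma>} = {{{1}}}" using Pi1 by auto
  then show ?case by simp
next
  case (step m)
  then show ?case using count5_step[OF step(1)]
    by (metis Suc_diff_le diff_Suc_1 power_Suc)
qed


definition noP :: "nat \<Rightarrow> nat set set \<Rightarrow> bool" where
  "noP n \<sigma> \<longleftrightarrow> \<not> (\<exists>i j l. 1 \<le> i \<and> i < j \<and> j < l \<and> l \<le> n \<and> mb \<sigma> i = mb \<sigma> j \<and> mb \<sigma> j < mb \<sigma> l)"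

lemma R3_eq: "{\<sigma> \<in> Pi_n n. \<not> contains (rgf \<sigma> n) [1,1,2]} = {\<sigma> \<in> Pi_n n. noP n \<sigma>}"
  unfolding noP_def using c112 by (auto simp: Pi_n_iff)

lemma Min_insert_big: assumes "finite C" "C \<noteq> {}" "\<forall>y\<in>C. y < x" shows "Min (insert x C) = Min C"
proof -
  have "Min (insert x C) = min x (Min C)" using assms(1,2) by simp
  moreover have "Min C < x" using assms Min_in by blast
  ultimately show ?thesis by simp
qed

context
  fixes n :: nat
  assumes n1: "n \<ge> 1"
begin

lemma mb_addB: assumes P: "partition_on {1..n} \<tau>" and m: "m \<in> {1..n}"
  shows "\<And>i. i \<in> {1..n} \<Longrightarrow> mb (addB n m \<tau>) i = mb \<tau> i" "mb (addB n m \<tau>) (Suc n) = mb \<tau> m"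
proof -
  let ?C = "blk \<tau> m"
  have C: "?C \<in> \<tau>" "m \<in> ?C" using blk_mem[OF P m] by auto
  have P': "partition_on {1..Suc n} (addB n m \<tau>)" using addB_part(1)[OF n1 P m] .
  have fC: "finite ?C" using blk_fin[OF P _ C(1)] by simp
  have lt: "\<forall>y\<in>?C. y < Suc n" using part_sub[OF P C(1)] by auto
  have MC: "Min (insert (Suc n) ?C) = Min ?C" using Min_insert_big[OF fC _ lt] C(2) by blast
  show "mb (addB n m \<tau>) (Suc n) = mb \<tau> m"
    unfolding mb_def addB_part(3)[OF n1 P m] MC ..
  fix i assume i: "i \<in> {1..n}"
  show "mb (addB n m \<tau>) i = mb \<tau> i"
  proof (cases "i \<in> ?C")
    case True
    have "insert (Suc n) ?C \<in> addB n m \<tau>" using addB_part(2)[OF n1 P m] .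
    then have "blk (addB n m \<tau>) i = insert (Suc n) ?C" using blk_eq[OF P'] True by blast
    moreover have "blk \<tau> i = ?C" using blk_eq[OF P C(1) True] .
    ultimately show ?thesis unfolding mb_def using MC by simp
  next
    case False
    have B: "blk \<tau> i \<in> \<tau>" "i \<in> blk \<tau> i" using blk_mem[OF P i] by auto
    have "blk \<tau> i \<noteq> ?C" using False B(2) by auto
    then have "blk \<tau> i \<in> addB n m \<tau>" unfolding addB_def[OF n1] using B(1) by auto
    then have "blk (addB n m \<tau>) i = blk \<tau> i" using blk_eq[OF P' _ B(2)] by blast
    then show ?thesis unfolding mb_def by simp
  qed
qed

lemma noP_addB: assumes P: "partition_on {1..n} \<tau>"
  shows "noP (Suc n) (addB n 1 \<tau>) \<longleftrightarrow> noP n \<tau>"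
proof -
  have one: "(1::nat) \<in> {1..n}" using n1 by simp
  have m1: "mb \<tau> 1 = 1" using mb_le[OF P _ one] mb_A[OF P _ one] by auto
  note e = mb_addB[OF P one]
  show ?thesis
  proof
    assume np: "noP (Suc n) (addB n 1 \<tau>)"
    show "noP n \<tau>" unfolding noP_def
    proof
      assume "\<exists>i j l. 1 \<le> i \<and> i < j \<and> j < l \<and> l \<le> n \<and> mb \<tau> i = mb \<tau> j \<and> mb \<tau> j < mb \<tau> l"
      then obtain i j l where h: "1 \<le> i" "i < j" "j < l" "l \<le> n" "mb \<tau> i = mb \<tau> j" "mb \<tau> j < mb \<tau> l" by blast
      have "mb (addB n 1 \<tau>) i = mb \<tau> i" "mb (addB n 1 \<tau>) j = mb \<tau> j" "mb (addB n 1 \<tau>) l = mb \<tau> l"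
        using e(1) h by auto
      then show False using np h unfolding noP_def by (metis le_SucI)
    qed
  next
    assume np: "noP n \<tau>"
    show "noP (Suc n) (addB n 1 \<tau>)" unfolding noP_def
    proof
      assume "\<exists>i j l. 1 \<le> i \<and> i < j \<and> j < l \<and> l \<le> Suc n \<and> mb (addB n 1 \<tau>) i = mb (addB n 1 \<tau>) j \<and> mb (addB n 1 \<tau>) j < mb (addB n 1 \<tau>) l"
      then obtain i j l where h: "1 \<le> i" "i < j" "j < l" "l \<le> Suc n" "mb (addB n 1 \<tau>) i = mb (addB n 1 \<tau>) j" "mb (addB n 1 \<tau>) j < mb (addB n 1 \<tau>) l" by blast
      have ij: "mb (addB n 1 \<tau>) i = mb \<tau> i" "mb (addB n 1 \<tau>) j = mb \<tau> j" using e(1) h by auto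
      show False
      proof (cases "l = Suc n")
        case True
        then have jA: "j \<in> {1..n}" using h by auto
        then have "mb \<tau> j \<ge> 1" using mb_A[OF P _ jA] by simp
        then show False using h(6) e(2) m1 ij(2) True by simp
      next
        case False
        then have "mb (addB n 1 \<tau>) l = mb \<tau> l" using e(1) h by auto
        then show False using np h ij False unfolding noP_def by (metis le_SucE)
      qed
    qed
  qed
qed

definition sh :: "nat set set \<Rightarrow> nat set set" where
  "sh \<tau> = insert {1} ((`) Suc ` \<tau>)"

definition unsh :: "nat set set \<Rightarrow> nat set set" where
  "unsh \<sigma> = (`) (\<lambda>x. x - 1) ` (\<sigma> - {{1}})"

lemma sh_part: assumes P: "partition_on {1..n} \<tau>" shows "partition_on {1..Suc n} (sh \<tau>)"
proof -
  have "partition_on (Suc ` {1..n}) ((`) Suc ` \<tau> - {{}})" using partition_on_inj_image[OF P, of Suc] by simp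
  moreover have "{} \<notin> (`) Suc ` \<tau>" using part_ne[OF P] by auto
  ultimately have "partition_on {2..Suc n} ((`) Suc ` \<tau>)" by (simp add: numeral_2_eq_2)
  then have "partition_on (insert 1 {2..Suc n}) (sh \<tau>)" unfolding sh_def by (rule P_addS) simp
  moreover have "insert 1 {2..Suc n} = {1..Suc n}" by auto
  ultimately show ?thesis by simp
qed

lemma mb_sh: assumes P: "partition_on {1..n} \<tau>"
  shows "mb (sh \<tau>) 1 = 1" "\<And>i. i \<in> {1..n} \<Longrightarrow> mb (sh \<tau>) (Suc i) = Suc (mb \<tau> i)"
proof -
  have P': "partition_on {1..Suc n} (sh \<tau>)" using sh_part[OF P] .
  have "{1} \<in> sh \<tau>" unfolding sh_def by simp
  then have "blk (sh \<tau>) 1 = {1}" using blk_eq[OF P'] by blast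
  then show "mb (sh \<tau>) 1 = 1" unfolding mb_def by simp
  fix i assume i: "i \<in> {1..n}"
  have B: "blk \<tau> i \<in> \<tau>" "i \<in> blk \<tau> i" using blk_mem[OF P i] by auto
  have "Suc ` blk \<tau> i \<in> sh \<tau>" unfolding sh_def using B(1) by auto
  then have "blk (sh \<tau>) (Suc i) = Suc ` blk \<tau> i" using blk_eq[OF P'] B(2) by blast
  moreover have "Suc (Min (blk \<tau> i)) = Min (Suc ` blk \<tau> i)"
    using mono_Min_commute[of Suc "blk \<tau> i"] blk_fin[OF P _ B(1)] B(2) by (auto simp: mono_def)
  ultimately show "mb (sh \<tau>) (Suc i) = Suc (mb \<tau> i)" unfolding mb_def by simp
qed

lemma noP_sh: assumes P: "partition_on {1..n} \<tau>"
  shows "noP (Suc n) (sh \<tau>) \<longleftrightarrow> noP n \<tau>"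
proof -
  note e = mb_sh[OF P]
  have P': "partition_on {1..Suc n} (sh \<tau>)" using sh_part[OF P] .
  show ?thesis
  proof
    assume np: "noP (Suc n) (sh \<tau>)"
    show "noP n \<tau>" unfolding noP_def
    proof
      assume "\<exists>i j l. 1 \<le> i \<and> i < j \<and> j < l \<and> l \<le> n \<and> mb \<tau> i = mb \<tau> j \<and> mb \<tau> j < mb \<tau> l"
      then obtain i j l where h: "1 \<le> i" "i < j" "j < l" "l \<le> n" "mb \<tau> i = mb \<tau> j" "mb \<tau> j < mb \<tau> l" by blast
      have "mb (sh \<tau>) (Suc i) = Suc (mb \<tau> i)" "mb (sh \<tau>) (Suc j) = Suc (mb \<tau> j)" "mb (sh \<tau>) (Suc l) = Suc (mb \<tau> l)"
        using e(2) h by auto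
      moreover have "1 \<le> Suc i \<and> Suc i < Suc j \<and> Suc j < Suc l \<and> Suc l \<le> Suc n" using h by simp
      ultimately show False using np h unfolding noP_def by (metis Suc_less_eq)
    qed
  next
    assume np: "noP n \<tau>"
    show "noP (Suc n) (sh \<tau>)" unfolding noP_def
    proof
      assume "\<exists>i j l. 1 \<le> i \<and> i < j \<and> j < l \<and> l \<le> Suc n \<and> mb (sh \<tau>) i = mb (sh \<tau>) j \<and> mb (sh \<tau>) j < mb (sh \<tau>) l"
      then obtain i j l where h: "1 \<le> i" "i < j" "j < l" "l \<le> Suc n" "mb (sh \<tau>) i = mb (sh \<tau>) j" "mb (sh \<tau>) j < mb (sh \<tau>) l" by blast
      have i1: "i \<noteq> 1"
      proof
        assume "i = 1"
        then have "mb (sh \<tau>) j = mb (sh \<tau>) 1" using h(5) by simp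
        moreover have jA: "j \<in> {1..Suc n}" using h by auto
        ultimately have "blk (sh \<tau>) j = blk (sh \<tau>) 1" using mb_eq_iff[OF P' _ jA, of 1] by simp
        moreover have "{1} \<in> sh \<tau>" unfolding sh_def by simp
        then have "blk (sh \<tau>) 1 = {1}" using blk_eq[OF P'] by blast
        ultimately have "j \<in> {1}" using blk_mem(2)[OF P' jA] by simp
        then show False using h \<open>i = 1\<close> by simp
      qed
      obtain i' j' l' where s: "i = Suc i'" "j = Suc j'" "l = Suc l'" using h i1
        by (metis Suc_pred' less_trans_Suc not_gr0 less_one le_neq_implies_less)
      have r: "1 \<le> i'" "i' < j'" "j' < l'" "l' \<le> n" using h s i1 by auto
      have "mb (sh \<tau>) i = Suc (mb \<tau> i')" "mb (sh \<tau>) j = Suc (mb \<tau> j')" "mb (sh \<tau>) l = Suc (mb \<tau> l')"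
        using e(2) r s by auto
      then have "mb \<tau> i' = mb \<tau> j'" "mb \<tau> j' < mb \<tau> l'" using h by auto
      then show False using np r unfolding noP_def by blast
    qed
  qed
qed

lemma unsh_sh: assumes P: "partition_on {1..n} \<tau>" shows "unsh (sh \<tau>) = \<tau>"
proof -
  have "{1} \<notin> (`) Suc ` \<tau>"
  proof
    assume "{1} \<in> (`) Suc ` \<tau>"
    then obtain x where x: "x \<in> \<tau>" "{1} = Suc ` x" by blast
    then have "1 \<in> Suc ` x" by (metis insertI1)
    then have "0 \<in> x" by auto
    then show False using part_sub[OF P x(1)] by auto
  qed
  then have "sh \<tau> - {{1}} = (`) Suc ` \<tau>" unfolding sh_def by auto
  then show ?thesis unfolding unsh_def by (simp add: image_image)
qed

lemma sh_unsh: assumes P: "partition_on {1..Suc n} \<sigma>" and o1: "{1} \<in> \<sigma>"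
  shows "partition_on {1..n} (unsh \<sigma>)" "sh (unsh \<sigma>) = \<sigma>"
proof -
  have ee: "{1..Suc n} - {1} = {2..Suc n}" by auto
  have r: "partition_on {2..Suc n} (\<sigma> - {{1}})" using P_rem[OF P o1] unfolding ee .
  have inj: "inj_on (\<lambda>x. x - 1) {2..Suc n}" by (auto simp: inj_on_def)
  have im: "(\<lambda>x::nat. x - 1) ` {2..Suc n} = {1..n}"
  proof
    show "(\<lambda>x::nat. x - 1) ` {2..Suc n} \<subseteq> {1..n}" by auto
    show "{1..n} \<subseteq> (\<lambda>x::nat. x - 1) ` {2..Suc n}"
    proof
      fix y assume "y \<in> {1..n}" then show "y \<in> (\<lambda>x::nat. x - 1) ` {2..Suc n}" by (intro image_eqI[of _ _ "Suc y"]) auto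
    qed
  qed
  have "partition_on {1..n} ((`) (\<lambda>x. x - 1) ` (\<sigma> - {{1}}) - {{}})" using partition_on_inj_image[OF r inj] im by simp
  moreover have "{} \<notin> (`) (\<lambda>x::nat. x - 1) ` (\<sigma> - {{1}})" using part_ne[OF r] by auto
  ultimately show "partition_on {1..n} (unsh \<sigma>)" unfolding unsh_def by simp
  have bk: "Suc ` ((\<lambda>x. x - 1) ` C) = C" if "C \<in> \<sigma> - {{1}}" for C
  proof -
    have "C \<subseteq> {2..Suc n}" using part_sub[OF r that] .
    then have "\<forall>x\<in>C. Suc (x - 1) = x" by auto
    then show ?thesis by (simp add: image_image)
  qed
  have "(`) Suc ` unsh \<sigma> = (\<lambda>C. Suc ` ((\<lambda>x. x - 1) ` C)) ` (\<sigma> - {{1}})"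
    unfolding unsh_def by (rule image_image)
  also have "\<dots> = (\<lambda>C. C) ` (\<sigma> - {{1}})" by (rule image_cong[OF refl bk])
  finally have "(`) Suc ` unsh \<sigma> = \<sigma> - {{1}}" by simp
  then show "sh (unsh \<sigma>) = \<sigma>" unfolding sh_def using o1 by auto
qed

lemma count3_step: "card {\<sigma> \<in> Pi_n (Suc n). noP (Suc n) \<sigma>} = 2 * card {\<sigma> \<in> Pi_n n. noP n \<sigma>}"
proof -
  let ?R = "\<lambda>n. {\<sigma> \<in> Pi_n n. noP n \<sigma>}"
  have one: "(1::nat) \<in> {1..n}" using n1 by simp
  have A: "{\<sigma> \<in> ?R (Suc n). {1} \<in> \<sigma>} = sh ` ?R n"
  proof
    show "{\<sigma> \<in> ?R (Suc n). {1} \<in> \<sigma>} \<subseteq> sh ` ?R n"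
    proof
      fix \<sigma> assume "\<sigma> \<in> {\<sigma> \<in> ?R (Suc n). {1} \<in> \<sigma>}"
      then have P: "partition_on {1..Suc n} \<sigma>" and np: "noP (Suc n) \<sigma>" and o1: "{1} \<in> \<sigma>" by (auto simp: Pi_n_iff)
      note u = sh_unsh[OF P o1]
      have "noP n (unsh \<sigma>)" using noP_sh[OF u(1)] u(2) np by simp
      then show "\<sigma> \<in> sh ` ?R n" using u by (auto simp: Pi_n_iff intro!: image_eqI[of _ _ "unsh \<sigma>"])
    qed
  next
    show "sh ` ?R n \<subseteq> {\<sigma> \<in> ?R (Suc n). {1} \<in> \<sigma>}"
      using sh_part noP_sh by (auto simp: Pi_n_iff sh_def)
  qed
  have B: "{\<sigma> \<in> ?R (Suc n). {1} \<notin> \<sigma>} = addB n 1 ` ?R n"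
  proof
    show "{\<sigma> \<in> ?R (Suc n). {1} \<notin> \<sigma>} \<subseteq> addB n 1 ` ?R n"
    proof
      fix \<sigma> assume "\<sigma> \<in> {\<sigma> \<in> ?R (Suc n). {1} \<notin> \<sigma>}"
      then have P: "partition_on {1..Suc n} \<sigma>" and np: "noP (Suc n) \<sigma>" and o1: "{1} \<notin> \<sigma>" by (auto simp: Pi_n_iff)
      let ?C = "blk \<sigma> 1"
      have oA: "(1::nat) \<in> {1..Suc n}" by simp
      have sA: "Suc n \<in> {1..Suc n}" by simp
      have C: "?C \<in> \<sigma>" "1 \<in> ?C" using blk_mem[OF P oA] by auto
      have "?C \<noteq> {1}" using C(1) o1 by metis
      then obtain j where j: "j \<in> ?C" "j \<noteq> 1" using C(2) by blast
      have jA: "j \<in> {1..Suc n}" using j C part_sub[OF P C(1)] by auto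
      have mb1: "mb \<sigma> 1 = 1" using mb_le[OF P _ oA] mb_A[OF P _ oA] by auto
      have mbj: "mb \<sigma> j = 1" using mb_eq_iff[OF P _ jA oA] blk_eq[OF P C(1) j(1)] mb1 by simp
      have snC: "Suc n \<in> ?C"
      proof (rule ccontr)
        assume nC: "Suc n \<notin> ?C"
        have "blk \<sigma> (Suc n) \<noteq> ?C" using blk_mem(2)[OF P sA] nC by auto
        then have "mb \<sigma> (Suc n) \<noteq> 1" using mb_eq_iff[OF P _ sA oA] mb1 by simp
        moreover have "mb \<sigma> (Suc n) \<ge> 1" using mb_A[OF P _ sA] by simp
        ultimately have "mb \<sigma> j < mb \<sigma> (Suc n)" using mbj by simp
        moreover have "j < Suc n" using jA nC j(1) by (metis atLeastAtMost_iff le_neq_implies_less)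
        moreover have "1 < j" using j jA by auto
        ultimately show False using np mb1 mbj unfolding noP_def by (metis le_refl)
      qed
      have Bs: "blk \<sigma> (Suc n) = ?C" using blk_eq[OF P C(1) snC] .
      have on: "(1::nat) \<noteq> Suc n" using n1 by simp
      have ne: "blk \<sigma> (Suc n) \<noteq> {Suc n}" using Bs C(2) on by force
      have m: "1 \<in> blk \<sigma> (Suc n) - {Suc n}" using Bs C(2) on by simp
      note D = addB_delB[OF n1 P ne m]
      have "noP n (delB n \<sigma>)" using noP_addB[OF D(1)] D(2) np by simp
      then show "\<sigma> \<in> addB n 1 ` ?R n" using D by (auto simp: Pi_n_iff intro!: image_eqI[of _ _ "delB n \<sigma>"])
    qed
  next
    show "addB n 1 ` ?R n \<subseteq> {\<sigma> \<in> ?R (Suc n). {1} \<notin> \<sigma>}"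
    proof
      fix \<sigma> assume "\<sigma> \<in> addB n 1 ` ?R n"
      then obtain \<tau> where t: "\<tau> \<in> ?R n" "\<sigma> = addB n 1 \<tau>" by blast
      have P: "partition_on {1..n} \<tau>" using t by (simp add: Pi_n_iff)
      have P': "partition_on {1..Suc n} \<sigma>" using addB_part(1)[OF n1 P one] t by simp
      have "noP (Suc n) \<sigma>" using noP_addB[OF P] t by simp
      moreover have "{1} \<notin> \<sigma>"
      proof
        assume "{1} \<in> \<sigma>"
        have i: "insert (Suc n) (blk \<tau> 1) \<in> \<sigma>" using addB_part(2)[OF n1 P one] t by simp
        have "1 \<in> insert (Suc n) (blk \<tau> 1)" using blk_mem(2)[OF P one] by simp
        then have "insert (Suc n) (blk \<tau> 1) = {1}" using part_unique[OF P' i \<open>{1} \<in> \<sigma>\<close>] by simp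
        then show False using n1 by auto
      qed
      ultimately show "\<sigma> \<in> {\<sigma> \<in> ?R (Suc n). {1} \<notin> \<sigma>}" using P' by (simp add: Pi_n_iff)
    qed
  qed
  have fin: "finite (?R n)" using finPi[of n] by simp
  have injS: "inj_on sh (?R n)"
    by (rule inj_on_inverseI[of _ unsh]) (use unsh_sh in \<open>auto simp: Pi_n_iff\<close>)
  have injB: "inj_on (addB n 1) (?R n)"
    by (rule inj_on_inverseI[of _ "delB n"]) (use delB_addB[OF n1 _ one] in \<open>auto simp: Pi_n_iff\<close>)
  have split: "?R (Suc n) = {\<sigma> \<in> ?R (Suc n). {1} \<in> \<sigma>} \<union> {\<sigma> \<in> ?R (Suc n). {1} \<notin> \<sigma>}" by blast
  have "card (?R (Suc n)) = card {\<sigma> \<in> ?R (Suc n). {1} \<in> \<sigma>} + card {\<sigma> \<in> ?R (Suc n). {1} \<notin> \<sigma>}"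
    by (subst split, rule card_Un_disjoint) (use finPi[of "Suc n"] in auto)
  also have "\<dots> = 2 * card (?R n)" unfolding A B using card_image[OF injS] card_image[OF injB] by simp
  finally show ?thesis .
qed

end

lemma count3: "n \<ge> 1 \<Longrightarrow> card {\<sigma> \<in> Pi_n n. \<not> contains (rgf \<sigma> n) [1,1,2]} = 2^(n-1)"
  unfolding R3_eq
proof (induction n rule: dec_induct[of 1])
  case base
  have "noP 1 {{1}}" unfolding noP_def by auto
  then have "{\<sigma> \<in> Pi_n 1. noP 1 \<sigma>} = {{{1}}}" using Pi1 by auto
  then show ?case by simp
next
  case (step m)
  then show ?case using count3_step[OF step(1)]
    by (metis Suc_diff_le diff_Suc_1 power_Suc)
qed


definition MM :: "'a set \<Rightarrow> 'a set set set" where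
  "MM A = {\<sigma>. partition_on A \<sigma> \<and> (\<forall>C\<in>\<sigma>. card C \<le> 2)}"

lemma MM_fin: "finite A \<Longrightarrow> finite (MM A)"
  unfolding MM_def using finitely_many_partition_on[of A] by (rule rev_finite_subset) auto

lemma MM_empty: "MM {} = {{}}"
  unfolding MM_def by (auto simp: partition_on_empty)

lemma ins_pair_part: assumes P: "partition_on B \<tau>" and x: "x \<notin> B" and j: "j \<notin> B" "j \<noteq> x"
  shows "partition_on (insert j (insert x B)) (insert {j,x} \<tau>)"
proof -
  have d: "disjnt {j,x} (\<Union>\<tau>)" using partition_onD1[OF P] x j by (auto simp: disjnt_def)
  have "insert j (insert x B) - {j,x} = B" using x j by auto
  then show ?thesis using partition_on_insert[OF d] P by auto
qed

lemma MM_step: assumes fin: "finite A" and x: "x \<in> A"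
  and IH: "\<And>B. B \<subseteq> A - {x} \<Longrightarrow> card (MM B) = aM (card B)"
  shows "card (MM A) = aM (card A)"
proof -
  let ?A' = "A - {x}"
  let ?Z = "insert {x} ` MM ?A'"
  let ?W = "\<lambda>j. insert {j,x} ` MM (?A' - {j})"
  have A: "A = insert x ?A'" using x by auto
  have finA': "finite ?A'" using fin by simp
  have cover: "MM A = ?Z \<union> (\<Union>j\<in>?A'. ?W j)"
  proof
    show "MM A \<subseteq> ?Z \<union> (\<Union>j\<in>?A'. ?W j)"
    proof
      fix \<sigma> assume s: "\<sigma> \<in> MM A"
      then have P: "partition_on A \<sigma>" and m: "\<forall>C\<in>\<sigma>. card C \<le> 2" unfolding MM_def by auto
      obtain C where C: "C \<in> \<sigma>" "x \<in> C" using part_ex[OF P x] by blast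
      have CA: "C \<subseteq> A" using part_sub[OF P C(1)] .
      have Cfin: "finite C" using CA fin finite_subset by blast
      have rem: "partition_on (A - C) (\<sigma> - {C})" using P_rem[OF P C(1)] .
      have mrem: "\<forall>D\<in>\<sigma> - {C}. card D \<le> 2" using m by auto
      have sC: "\<sigma> = insert C (\<sigma> - {C})" using C(1) by auto
      show "\<sigma> \<in> ?Z \<union> (\<Union>j\<in>?A'. ?W j)"
      proof (cases "C = {x}")
        case True
        have "\<sigma> - {C} \<in> MM ?A'" unfolding MM_def using rem mrem True by auto
        then show ?thesis using sC True by blast
      next
        case False
        then obtain j where j: "j \<in> C" "j \<noteq> x" using C(2) by blast
        have "card {j,x} \<le> card C" using j C(2) Cfin by (intro card_mono) auto
        moreover have "card C \<le> 2" using m C(1) by blast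
        moreover have "card {j,x} = 2" using j(2) by simp
        ultimately have "card {j,x} = card C" by simp
        then have Cj: "C = {j,x}" using card_subset_eq[OF Cfin, of "{j,x}"] j C(2) by auto
        have jA: "j \<in> ?A'" using j CA by auto
        have "A - C = ?A' - {j}" using Cj by auto
        then have "\<sigma> - {C} \<in> MM (?A' - {j})" unfolding MM_def using rem mrem by auto
        then have "\<sigma> \<in> ?W j" using sC Cj by blast
        then show ?thesis using jA by blast
      qed
    qed
  next
    show "?Z \<union> (\<Union>j\<in>?A'. ?W j) \<subseteq> MM A"
    proof
      fix \<sigma> assume "\<sigma> \<in> ?Z \<union> (\<Union>j\<in>?A'. ?W j)"
      then show "\<sigma> \<in> MM A"
      proof
        assume "\<sigma> \<in> ?Z"
        then obtain \<tau> where t: "\<tau> \<in> MM ?A'" "\<sigma> = insert {x} \<tau>" by blast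
        have "partition_on (insert x ?A') \<sigma>" using P_addS[of ?A' \<tau> x] t unfolding MM_def by simp
        then show ?thesis using t A unfolding MM_def by auto
      next
        assume "\<sigma> \<in> (\<Union>j\<in>?A'. ?W j)"
        then obtain j \<tau> where t: "j \<in> ?A'" "\<tau> \<in> MM (?A' - {j})" "\<sigma> = insert {j,x} \<tau>" by blast
        have "partition_on (insert j (insert x (?A' - {j}))) \<sigma>"
          using ins_pair_part[of "?A' - {j}" \<tau> x j] t unfolding MM_def by auto
        moreover have "insert j (insert x (?A' - {j})) = A" using t(1) x by auto
        moreover have "card {j,x} \<le> 2" by (simp add: card_insert_le_m1)
        ultimately show ?thesis using t unfolding MM_def by auto
      qed
    qed
  qed
  have inj0: "inj_on (insert {x}) (MM ?A')"
  proof (rule inj_on_inverseI[of _ "\<lambda>\<sigma>. \<sigma> - {{x}}"])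
    fix \<tau> assume "\<tau> \<in> MM ?A'"
    then have "{x} \<notin> \<tau>" unfolding MM_def using part_sub by fastforce
    then show "insert {x} \<tau> - {{x}} = \<tau>" by simp
  qed
  have injj: "inj_on (insert {j,x}) (MM (?A' - {j}))" for j
  proof (rule inj_on_inverseI[of _ "\<lambda>\<sigma>. \<sigma> - {{j,x}}"])
    fix \<tau> assume "\<tau> \<in> MM (?A' - {j})"
    then have "{j,x} \<notin> \<tau>" unfolding MM_def using part_sub by fastforce
    then show "insert {j,x} \<tau> - {{j,x}} = \<tau>" by simp
  qed
  have memx: "D = D'" if "\<sigma> \<in> MM A" "D \<in> \<sigma>" "D' \<in> \<sigma>" "x \<in> D" "x \<in> D'" for \<sigma> D D'
  proof -
    have "partition_on A \<sigma>" using that(1) unfolding MM_def by simp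
    then show ?thesis using part_unique[of A \<sigma> D D' x] that(2-5) by blast
  qed
  have d0: "?Z \<inter> (\<Union>j\<in>?A'. ?W j) = {}"
  proof (rule ccontr)
    assume "?Z \<inter> (\<Union>j\<in>?A'. ?W j) \<noteq> {}"
    then obtain \<sigma> j where s: "\<sigma> \<in> ?Z" "j \<in> ?A'" "\<sigma> \<in> ?W j" by blast
    have "\<sigma> \<in> MM A" using cover s by blast
    moreover have "{x} \<in> \<sigma>" using s(1) by blast
    moreover have "{j,x} \<in> \<sigma>" using s(3) by blast
    ultimately have "{x} = {j,x}" using memx by blast
    then show False using s(2) by auto
  qed
  have dj: "\<forall>j\<in>?A'. \<forall>k\<in>?A'. j \<noteq> k \<longrightarrow> ?W j \<inter> ?W k = {}"
  proof (intro ballI impI, rule ccontr)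
    fix j k assume jk: "j \<in> ?A'" "k \<in> ?A'" "j \<noteq> k" and "?W j \<inter> ?W k \<noteq> {}"
    then obtain \<sigma> where s: "\<sigma> \<in> ?W j" "\<sigma> \<in> ?W k" by blast
    have "\<sigma> \<in> MM A" using cover s jk by blast
    moreover have "{j,x} \<in> \<sigma>" using s(1) by blast
    moreover have "{k,x} \<in> \<sigma>" using s(2) by blast
    ultimately have "{j,x} = {k,x}" using memx by blast
    then show False using jk by (auto simp: doubleton_eq_iff)
  qed
  have finS: "finite (?W j)" for j using MM_fin[of "?A' - {j}"] finA' by simp
  have cU: "card (\<Union>j\<in>?A'. ?W j) = (\<Sum>j\<in>?A'. card (?W j))"
    by (rule card_UN_disjoint[OF finA']) (use finS dj in auto)
  have cSj: "card (?W j) = aM (card ?A' - 1)" if "j \<in> ?A'" for j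
  proof -
    have "card (?W j) = card (MM (?A' - {j}))" using card_image[OF injj] .
    also have "\<dots> = aM (card (?A' - {j}))" using IH[of "?A' - {j}"] by auto
    also have "card (?A' - {j}) = card ?A' - 1" using that finA' by simp
    finally show ?thesis .
  qed
  have "card (MM A) = card ?Z + card (\<Union>j\<in>?A'. ?W j)"
    unfolding cover by (rule card_Un_disjoint) (use MM_fin finA' finS d0 in auto)
  also have "card ?Z = aM (card ?A')" using card_image[OF inj0] IH[of ?A'] by simp
  also have "card (\<Union>j\<in>?A'. ?W j) = card ?A' * aM (card ?A' - 1)" using cU cSj by simp
  also have "aM (card ?A') + card ?A' * aM (card ?A' - 1) = aM (Suc (card ?A'))" using aM_rec by simp
  also have "Suc (card ?A') = card A" using card_Suc_Diff1[OF fin x] .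
  finally show ?thesis .
qed

lemma MM_card: "finite A \<Longrightarrow> card (MM A) = aM (card A)"
proof (induction "card A" arbitrary: A rule: less_induct)
  case less
  show ?case
  proof (cases "A = {}")
    case True
    then show ?thesis by (simp add: MM_empty aM_def dfact_def)
  next
    case False
    then obtain x where x: "x \<in> A" by blast
    show ?thesis
    proof (rule MM_step[OF less.prems x])
      fix B assume B: "B \<subseteq> A - {x}"
      have "card B < card A" using B x less.prems
        by (meson Diff_subset card_mono card_Diff1_less finite_Diff order_le_less_trans)
      moreover have "finite B" using B less.prems finite_subset by blast
      ultimately show "card (MM B) = aM (card B)" using less.hyps by blast
    qed
  qed
qed

lemma count2: "card {\<sigma> \<in> Pi_n n. is_matching \<sigma>} = (\<Sum>i\<le>n. (n choose (2*i)) * dfact i)"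
proof -
  have "{\<sigma> \<in> Pi_n n. is_matching \<sigma>} = MM {1..n}" unfolding MM_def Pi_n_def is_matching_def by auto
  then show ?thesis using MM_card[of "{1..n}"] by (simp add: aM_def)
qed


theorem theorem4p3:
  fixes n :: nat
  assumes "n \<ge> 1"
  shows
   "(R_avoid n {{1},{2},{3}} = {\<sigma> \<in> Pi_n n. card \<sigma> \<le> 2}
      \<and> card (R_avoid n {{1},{2},{3}}) = 2^(n-1))
    \<and> (R_avoid n {{1,2,3}} = {\<sigma> \<in> Pi_n n. is_matching \<sigma>}
      \<and> card (R_avoid n {{1,2,3}}) = (\<Sum>i\<le>n. (n choose (2*i)) * dfact i))
    \<and> (R_avoid n {{1,2},{3}} =
        {\<sigma> \<in> Pi_n n. \<exists>k\<le>n. restr \<sigma> {1..k} = {{i} | i. i \<in> {1..k}}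
           \<and> layered (restr \<sigma> {k+1..n})
           \<and> (\<forall>D\<in>restr \<sigma> {k+1..n}. \<forall>D'\<in>restr \<sigma> {k+1..n}.
                 Min D < Min D' \<longrightarrow> Bidx \<sigma> D > Bidx \<sigma> D')}
      \<and> card (R_avoid n {{1,2},{3}}) = 2^(n-1))
    \<and> (R_avoid n {{1},{2,3}} =
        {\<sigma> \<in> Pi_n n. \<forall>C\<in>\<sigma>. blockidx \<sigma> C \<ge> 2 \<longrightarrow> card C = 1}
      \<and> card (R_avoid n {{1},{2,3}}) = 2^(n-1))
    \<and> (R_avoid n {{1,3},{2}} = {\<sigma> \<in> Pi_n n. layered \<sigma>}
      \<and> card (R_avoid n {{1,3},{2}}) = 2^(n-1))"
proof -
  have n1: "n \<ge> 1" using assms .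
  have Pn: "\<And>\<sigma>. \<sigma> \<in> Pi_n n \<longleftrightarrow> partition_on {1..n} \<sigma>" by (simp add: Pi_n_iff)
  have e1: "R_avoid n {{1},{2},{3}} = {\<sigma> \<in> Pi_n n. card \<sigma> \<le> 2}"
    unfolding R_avoid_def rgf_123 using char1 by (auto simp: Pn)
  have e2: "R_avoid n {{1,2,3}} = {\<sigma> \<in> Pi_n n. is_matching \<sigma>}"
    unfolding R_avoid_def rgf_111 using char2 by (auto simp: Pn)
  have e3a: "R_avoid n {{1,2},{3}} = {\<sigma> \<in> Pi_n n. \<not> contains (rgf \<sigma> n) [1,1,2]}"
    unfolding R_avoid_def rgf_112 ..
  have e3: "R_avoid n {{1,2},{3}} =
        {\<sigma> \<in> Pi_n n. \<exists>k\<le>n. restr \<sigma> {1..k} = {{i} | i. i \<in> {1..k}}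
           \<and> layered (restr \<sigma> {k+1..n})
           \<and> (\<forall>D\<in>restr \<sigma> {k+1..n}. \<forall>D'\<in>restr \<sigma> {k+1..n}.
                 Min D < Min D' \<longrightarrow> Bidx \<sigma> D > Bidx \<sigma> D')}"
    unfolding e3a using char3_a char3_b by (auto simp: Pn)
  have e4: "R_avoid n {{1},{2,3}} = {\<sigma> \<in> Pi_n n. \<forall>C\<in>\<sigma>. blockidx \<sigma> C \<ge> 2 \<longrightarrow> card C = 1}"
    unfolding R_avoid_def rgf_122 using char4 by (auto simp: Pn)
  have e5: "R_avoid n {{1,3},{2}} = {\<sigma> \<in> Pi_n n. layered \<sigma>}"
    unfolding R_avoid_def rgf_121 using char5 by (auto simp: Pn)
  show ?thesis
    using e1 e2 e3 e3a e4 e5 count1[OF n1] count2[of n] count3[OF n1] count4[OF n1] count5[OF n1]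
    by simp
qed

end
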